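(* If the based space $X$ is $\pi_1$-injective, then $\pi_1^{\tau}(X)$ is Hausdorff.
   Context: Let $X\to(X_\lambda,p_{\lambda\lambda'},\Lambda)$ be an expansion of $X$ in the homotopy category of based polyhedra (e.g. the Čech expansion): based polyhedra $X_\lambda$ indexed by a directed set $\Lambda$, based maps $p_\lambda:X\to X_\lambda$ and bonding maps $p_{\lambda\lambda'}:X_{\lambda'}\to X_\lambda$ with $p_\lambda\simeq p_{\lambda\lambda'}\circ p_{\lambda'}$ for $\lambda'\ge\lambda$. The first shape homotopy group $\check\pi_1(X)$ is the inverse limit of the discrete groups $\pi_1(X_\lambda)$ along the homomorphisms $(p_{\lambda\lambda'})_*$; it is a Hausdorff topological group. The maps $p_\lambda$ induce a homomorphism $\phi:\pi_1(X)\to\check\pi_1(X)$; $X$ is $\pi_1$-injective if $\phi$ is injective. $\pi_1^{qtop}(X)$ is $\pi_1(X)$ with the quotient topology from the based loop space $\Omega(X)$ (compact-open topology) via $\alpha\mapsto[\alpha]$. $F_M(S)$ is the free (Markov) topological group on a space $S$. For a group with topology $G$, $\tau(G)$ is $G$ with the quotient topology with respect to the multiplication epimorphism $m_G:F_M(G)\to G$ (generator $g\mapsto g$). $\pi_1^{\tau}=\tau\circ\pi_1^{qtop}$. *)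

theory Defs
  imports "HOL-Analysis.Analysis"
begin

text \<open>Loops are maps [0,1] -> X; to make them unique as HOL functions we
normalise them to be constantly the base point outside [0,1].\<close>

definition loops :: "'a topology \<Rightarrow> 'a \<Rightarrow> (real \<Rightarrow> 'a) set" where
  "loops X x0 = {g. pathin X g \<and> g 0 = x0 \<and> g 1 = x0 \<and> (\<forall>t. t \<notin> {0..1} \<longrightarrow> g t = x0)}"

definition loop_homotopic :: "'a topology \<Rightarrow> 'a \<Rightarrow> (real \<Rightarrow> 'a) \<Rightarrow> (real \<Rightarrow> 'a) \<Rightarrow> bool" where
  "loop_homotopic X x0 f g \<longleftrightarrow> f \<in> loops X x0 \<and> g \<in> loops X x0 \<and>
     homotopic_with (\<lambda>h. h 0 = x0 \<and> h 1 = x0) (top_of_set {0..1}) X f g"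

definition loop_concat :: "(real \<Rightarrow> 'a) \<Rightarrow> (real \<Rightarrow> 'a) \<Rightarrow> real \<Rightarrow> 'a" where
  "loop_concat f g = (\<lambda>t. if t \<le> 1/2 then f (2 * t) else g (2 * t - 1))"

definition loop_reverse :: "(real \<Rightarrow> 'a) \<Rightarrow> real \<Rightarrow> 'a" where
  "loop_reverse f = (\<lambda>t. f (1 - t))"

definition loop_class :: "'a topology \<Rightarrow> 'a \<Rightarrow> (real \<Rightarrow> 'a) \<Rightarrow> (real \<Rightarrow> 'a) set" where
  "loop_class X x0 f = {g. loop_homotopic X x0 f g}"

definition pi1_carrier :: "'a topology \<Rightarrow> 'a \<Rightarrow> (real \<Rightarrow> 'a) set set" where
  "pi1_carrier X x0 = loop_class X x0 ` loops X x0"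

definition pi1_mult :: "'a topology \<Rightarrow> 'a \<Rightarrow> (real \<Rightarrow> 'a) set \<Rightarrow> (real \<Rightarrow> 'a) set \<Rightarrow> (real \<Rightarrow> 'a) set" where
  "pi1_mult X x0 A B = loop_class X x0 (loop_concat (SOME f. f \<in> A) (SOME g. g \<in> B))"

definition pi1_inv :: "'a topology \<Rightarrow> 'a \<Rightarrow> (real \<Rightarrow> 'a) set \<Rightarrow> (real \<Rightarrow> 'a) set" where
  "pi1_inv X x0 A = loop_class X x0 (loop_reverse (SOME f. f \<in> A))"

definition pi1_one :: "'a topology \<Rightarrow> 'a \<Rightarrow> (real \<Rightarrow> 'a) set" where
  "pi1_one X x0 = loop_class X x0 (\<lambda>t. x0)"

text \<open>Based loop space Omega(X) with the compact-open topology (subbasis: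
{g. g ` K \<subseteq> W}, K compact in [0,1], W open in X).\<close>
definition loop_space :: "'a topology \<Rightarrow> 'a \<Rightarrow> (real \<Rightarrow> 'a) topology" where
  "loop_space X x0 = subtopology
     (topology_generated_by
        {{g \<in> loops X x0. g ` K \<subseteq> W} | K W. compact K \<and> K \<subseteq> {0..1} \<and> openin X W})
     (loops X x0)"

definition quotient_top :: "'b topology \<Rightarrow> ('b \<Rightarrow> 'c) \<Rightarrow> 'c set \<Rightarrow> 'c topology" where
  "quotient_top T q S = topology (\<lambda>U. U \<subseteq> S \<and> openin T {x \<in> topspace T. q x \<in> U})"

definition pi1_qtop :: "'a topology \<Rightarrow> 'a \<Rightarrow> (real \<Rightarrow> 'a) set topology" where
  "pi1_qtop X x0 = quotient_top (loop_space X x0) (loop_class X x0) (pi1_carrier X x0)"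

text \<open>Words: lists of letters (g, True) = g, (g, False) = g^-1.\<close>
fun push_letter :: "'g \<times> bool \<Rightarrow> ('g \<times> bool) list \<Rightarrow> ('g \<times> bool) list" where
  "push_letter x [] = [x]"
| "push_letter x (y # ys) = (if fst x = fst y \<and> snd x \<noteq> snd y then ys else x # y # ys)"

definition free_reduce :: "('g \<times> bool) list \<Rightarrow> ('g \<times> bool) list" where
  "free_reduce w = foldr push_letter w []"

definition free_group_carrier :: "'g set \<Rightarrow> ('g \<times> bool) list set" where
  "free_group_carrier S = {w. fst ` set w \<subseteq> S \<and> free_reduce w = w}"

definition free_mult :: "('g \<times> bool) list \<Rightarrow> ('g \<times> bool) list \<Rightarrow> ('g \<times> bool) list" where
  "free_mult v w = free_reduce (v @ w)"

definition free_inv :: "('g \<times> bool) list \<Rightarrow> ('g \<times> bool) list" where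
  "free_inv w = rev (map (\<lambda>(g, b). (g, \<not> b)) w)"

definition free_gen :: "'g \<Rightarrow> ('g \<times> bool) list" where
  "free_gen g = [(g, True)]"

definition group_topology :: "'b topology \<Rightarrow> 'b set \<Rightarrow> ('b \<Rightarrow> 'b \<Rightarrow> 'b) \<Rightarrow> ('b \<Rightarrow> 'b) \<Rightarrow> bool" where
  "group_topology T C mlt iv \<longleftrightarrow> topspace T = C \<and>
     continuous_map (prod_topology T T) T (\<lambda>(a, b). mlt a b) \<and>
     continuous_map T T iv"

text \<open>F_M(S): the free group on the points of S with the finest group topology
making the generator map S -> F(S) continuous (supremum of all such group topologies).\<close>
definition markov_top :: "'g topology \<Rightarrow> ('g \<times> bool) list topology" where
  "markov_top S = subtopology
     (topology_generated_by
        (\<Union> {{U. openin T U} | T. group_topology T (free_group_carrier (topspace S)) free_mult free_inv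
                                  \<and> continuous_map S T free_gen}))
     (free_group_carrier (topspace S))"

definition word_product :: "('g \<Rightarrow> 'g \<Rightarrow> 'g) \<Rightarrow> ('g \<Rightarrow> 'g) \<Rightarrow> 'g \<Rightarrow> ('g \<times> bool) list \<Rightarrow> 'g" where
  "word_product mlt iv one w = foldr (\<lambda>(g, b) acc. mlt (if b then g else iv g) acc) w one"

definition tau_top :: "'g topology \<Rightarrow> ('g \<Rightarrow> 'g \<Rightarrow> 'g) \<Rightarrow> ('g \<Rightarrow> 'g) \<Rightarrow> 'g \<Rightarrow> 'g topology" where
  "tau_top G mlt iv one = quotient_top (markov_top G) (word_product mlt iv one) (topspace G)"

definition pi1_tau :: "'a topology \<Rightarrow> 'a \<Rightarrow> (real \<Rightarrow> 'a) set topology" where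
  "pi1_tau X x0 = tau_top (pi1_qtop X x0) (pi1_mult X x0) (pi1_inv X x0) (pi1_one X x0)"

definition pointed_open_cover :: "'a topology \<Rightarrow> 'a \<Rightarrow> 'a set set \<Rightarrow> 'a set \<Rightarrow> bool" where
  "pointed_open_cover X x0 U U0 \<longleftrightarrow> (\<forall>V\<in>U. openin X V) \<and> \<Union>U = topspace X \<and>
     U0 \<in> U \<and> x0 \<in> U0 \<and> (\<forall>V\<in>U. V \<noteq> U0 \<longrightarrow> x0 \<notin> V)"

text \<open>Locally finite partition of unity subordinate to U (indexed by the members of U);
a cover admitting one is a normal (numerable) cover.\<close>
definition partition_of_unity :: "'a topology \<Rightarrow> 'a set set \<Rightarrow> ('a set \<Rightarrow> 'a \<Rightarrow> real) \<Rightarrow> bool" where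
  "partition_of_unity X U \<phi> \<longleftrightarrow>
     (\<forall>V\<in>U. continuous_map X euclideanreal (\<phi> V)) \<and>
     (\<forall>V. \<forall>x\<in>topspace X. 0 \<le> \<phi> V x) \<and>
     (\<forall>V. V \<notin> U \<longrightarrow> (\<forall>x\<in>topspace X. \<phi> V x = 0)) \<and>
     (\<forall>V\<in>U. X closure_of {x \<in> topspace X. \<phi> V x \<noteq> 0} \<subseteq> V) \<and>
     (\<forall>x\<in>topspace X. \<exists>W. openin X W \<and> x \<in> W \<and>
         finite {V\<in>U. \<exists>y\<in>W. \<phi> V y \<noteq> 0}) \<and>
     (\<forall>x\<in>topspace X. (\<Sum>V\<in>{V\<in>U. \<phi> V x \<noteq> 0}. \<phi> V x) = 1)"

definition fsupp :: "('v \<Rightarrow> real) \<Rightarrow> 'v set" where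
  "fsupp t = {v. t v \<noteq> 0}"

text \<open>Geometric realisation of the nerve N(U) (vertices: members of U; simplices:
finite subfamilies with nonempty intersection), as barycentric coordinate functions,
with the (metric) l1 topology.\<close>
definition nerve_points :: "'a set set \<Rightarrow> ('a set \<Rightarrow> real) set" where
  "nerve_points U = {t. (\<forall>V. 0 \<le> t V) \<and> finite (fsupp t) \<and> fsupp t \<subseteq> U \<and>
      \<Inter>(fsupp t) \<noteq> {} \<and> (\<Sum>V\<in>fsupp t. t V) = 1}"

definition l1_dist :: "('v \<Rightarrow> real) \<Rightarrow> ('v \<Rightarrow> real) \<Rightarrow> real" where
  "l1_dist s t = (\<Sum>V\<in>fsupp s \<union> fsupp t. \<bar>s V - t V\<bar>)"

definition nerve_top :: "'a set set \<Rightarrow> ('a set \<Rightarrow> real) topology" where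
  "nerve_top U = topology (\<lambda>W. W \<subseteq> nerve_points U \<and>
     (\<forall>t\<in>W. \<exists>e>0. \<forall>s\<in>nerve_points U. l1_dist t s < e \<longrightarrow> s \<in> W))"

definition nerve_vertex :: "'a set \<Rightarrow> ('a set \<Rightarrow> real)" where
  "nerve_vertex U0 = (\<lambda>V. if V = U0 then 1 else 0)"

definition canonical_map :: "('a set \<Rightarrow> 'a \<Rightarrow> real) \<Rightarrow> 'a \<Rightarrow> ('a set \<Rightarrow> real)" where
  "canonical_map \<phi> x = (\<lambda>V. \<phi> V x)"

text \<open>phi : pi_1(X) -> shape group injective, using the based Cech expansion:
two based loops with equal images in every pi_1(|N(U)|, U0) are homotopic.\<close>
definition pi1_injective :: "'a topology \<Rightarrow> 'a \<Rightarrow> bool" where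
  "pi1_injective X x0 \<longleftrightarrow>
     (\<forall>\<alpha>\<in>loops X x0. \<forall>\<beta>\<in>loops X x0.
        (\<forall>U U0 \<phi>. pointed_open_cover X x0 U U0 \<and> partition_of_unity X U \<phi> \<longrightarrow>
            loop_homotopic (nerve_top U) (nerve_vertex U0)
               (canonical_map \<phi> \<circ> \<alpha>) (canonical_map \<phi> \<circ> \<beta>))
        \<longrightarrow> loop_homotopic X x0 \<alpha> \<beta>)"

end

theory Submission
  imports Defs
begin

lemma loopsD:
  assumes "f \<in> loops X x0"
  shows "pathin X f" "f 0 = x0" "f 1 = x0" "\<And>t. t \<notin> {0..1} \<Longrightarrow> f t = x0"
  using assms by (auto simp: loops_def)

lemma loops_in_topspace: "f \<in> loops X x0 \<Longrightarrow> t \<in> {0..1} \<Longrightarrow> f t \<in> topspace X"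
  using loopsD(1)[of f X x0] unfolding pathin_def continuous_map_def by auto

lemma lhom_intro:
  assumes f: "f \<in> loops Y y0" and g: "g \<in> loops Y y0"
    and h: "continuous_map (top_of_set ({0..1::real}\<times>{0..1::real})) Y h"
    and h0: "\<And>t. t\<in>{0..1} \<Longrightarrow> h(0,t) = f t"
    and h1: "\<And>t. t\<in>{0..1} \<Longrightarrow> h(1,t) = g t"
    and hb: "\<And>s. s\<in>{0..1} \<Longrightarrow> h(s,0) = y0 \<and> h(s,1) = y0"
  shows "loop_homotopic Y y0 f g"
  unfolding loop_homotopic_def
proof (intro conjI f g)
  show "homotopic_with (\<lambda>h. h 0 = y0 \<and> h 1 = y0) (top_of_set {0..1}) Y f g"
  proof (subst homotopic_with)
    show "\<exists>k. continuous_map (prod_topology (top_of_set {0..1::real}) (top_of_set {0..1::real})) Y k \<and>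
          (\<forall>x\<in>topspace (top_of_set {0..1}). k (0, x) = f x) \<and>
          (\<forall>x\<in>topspace (top_of_set {0..1}). k (1, x) = g x) \<and>
          (\<forall>t\<in>{0..1}. (\<lambda>x. k (t, x)) 0 = y0 \<and> (\<lambda>x. k (t, x)) 1 = y0)"
    proof (rule exI[where x=h], intro conjI ballI)
      show "continuous_map (prod_topology (top_of_set {0..1}) (top_of_set {0..1::real})) Y h"
        using h by (simp only: prod_topology_subtopology_eu)
      show "h (0, x) = f x" if "x \<in> topspace (top_of_set {0..1})" for x
        using h0 that by simp
      show "h (1, x) = g x" if "x \<in> topspace (top_of_set {0..1})" for x
        using h1 that by simp
      show "(\<lambda>x. h (t, x)) 0 = y0" "(\<lambda>x. h (t, x)) 1 = y0" if "t \<in> {0..1}" for t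
        using hb[OF that] by simp_all
    qed
  qed simp
qed


lemma cm_reparam:
  assumes "pathin Y \<gamma>" "continuous_on D r" "\<And>z. z\<in>D \<Longrightarrow> r z \<in> {0..1::real}"
  shows "continuous_map (top_of_set D) Y (\<lambda>z. \<gamma> (r z))"
proof -
  have "continuous_map (top_of_set D) (top_of_set {0..1}) r" using assms(2,3) by auto
  from continuous_map_compose[OF this assms(1)[unfolded pathin_def]] show ?thesis
    by (simp add: o_def)
qed

lemma cm_reparam2:
  assumes "continuous_map (top_of_set ({0..1::real}\<times>{0..1::real})) Y k" "continuous_on D r"
    "\<And>z. z\<in>D \<Longrightarrow> r z \<in> {0..1::real}\<times>{0..1::real}"
  shows "continuous_map (top_of_set D) Y (\<lambda>z. k (r z))"
proof -
  have "continuous_map (top_of_set D) (top_of_set ({0..1::real}\<times>{0..1::real})) r" using assms(2,3) by auto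
  from continuous_map_compose[OF this assms(1)] show ?thesis
    by (simp add: o_def)
qed

lemma cm_cases_le:
  fixes p :: "'b::topological_space \<Rightarrow> real"
  assumes "continuous_on D p" "continuous_map (top_of_set {z\<in>D. p z \<le> c}) Y f"
    "continuous_map (top_of_set {z\<in>D. c \<le> p z}) Y g" "\<And>z. z \<in> D \<Longrightarrow> p z = c \<Longrightarrow> f z = g z"
  shows "continuous_map (top_of_set D) Y (\<lambda>z. if p z \<le> c then f z else g z)"
proof (rule continuous_map_cases_le)
  show "continuous_map (top_of_set D) euclideanreal p" using assms(1) by simp
  show "continuous_map (top_of_set D) euclideanreal (\<lambda>x. c)" by simp
  have e1: "D \<inter> {x. x \<in> D \<and> p x \<le> c} = {z\<in>D. p z \<le> c}" by auto
  show "continuous_map (subtopology (top_of_set D) {x. x \<in> topspace (top_of_set D) \<and> p x \<le> c}) Y f"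
    using assms(2) by (simp add: subtopology_subtopology e1)
  have e2: "D \<inter> {x. x \<in> D \<and> c \<le> p x} = {z\<in>D. c \<le> p z}" by auto
  show "continuous_map (subtopology (top_of_set D) {x. x \<in> topspace (top_of_set D) \<and> c \<le> p x}) Y g"
    using assms(3) by (simp add: subtopology_subtopology e2)
  show "f x = g x" if "x \<in> topspace (top_of_set D)" "p x = c" for x
    using assms(4) that by simp
qed

lemma const_loops: "y0 \<in> topspace Y \<Longrightarrow> (\<lambda>t. y0) \<in> loops Y y0"
  by (simp add: loops_def)

lemma concat_loops:
  assumes f: "f \<in> loops Y y0" and g: "g \<in> loops Y y0"
  shows "loop_concat f g \<in> loops Y y0"
proof -
  have "pathin Y (\<lambda>t. if t \<le> 1/2 then f (2*t) else g (2*t - 1))"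
    unfolding pathin_def
  proof (rule cm_cases_le)
    show "continuous_on {0..1} (\<lambda>t::real. t)" by (intro continuous_intros)
    show "continuous_map (top_of_set {z \<in> {0..1}. z \<le> 1/2}) Y (\<lambda>t. f (2 * t))"
      by (rule cm_reparam[OF loopsD(1)[OF f]]) (auto intro!: continuous_intros)
    show "continuous_map (top_of_set {z \<in> {0..1}. 1/2 \<le> z}) Y (\<lambda>t. g (2 * t - 1))"
      by (rule cm_reparam[OF loopsD(1)[OF g]]) (auto intro!: continuous_intros)
    show "f (2 * z) = g (2 * z - 1)" if "z = 1/2" for z
    proof -
      have "2 * z = 1" "2 * z - 1 = 0" using that by simp_all
      then show ?thesis using loopsD[OF f] loopsD[OF g] by simp
    qed
  qed
  moreover have "loop_concat f g t = y0" if "t \<notin> {0..1}" for t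
    using that loopsD(4)[OF f, of "2*t"] loopsD(4)[OF g, of "2*t-1"] by (auto simp: loop_concat_def)
  ultimately show ?thesis
    using loopsD[OF f] loopsD[OF g] unfolding loops_def loop_concat_def by auto
qed

lemma reverse_loops:
  assumes f: "f \<in> loops Y y0"
  shows "loop_reverse f \<in> loops Y y0"
proof -
  have "pathin Y (\<lambda>t. f (1 - t))"
    unfolding pathin_def
    by (rule cm_reparam[OF loopsD(1)[OF f]]) (auto intro!: continuous_intros)
  moreover have "loop_reverse f t = y0" if "t \<notin> {0..1}" for t
    using that loopsD(4)[OF f, of "1-t"] by (auto simp: loop_reverse_def)
  ultimately show ?thesis
    using loopsD[OF f] unfolding loops_def loop_reverse_def by auto
qed

lemma lh_loops: "loop_homotopic Y y0 f g \<Longrightarrow> f \<in> loops Y y0 \<and> g \<in> loops Y y0"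
  by (simp add: loop_homotopic_def)

lemma lh_refl: "f \<in> loops Y y0 \<Longrightarrow> loop_homotopic Y y0 f f"
  unfolding loop_homotopic_def using loopsD[of f Y y0] by (simp add: pathin_def)

lemma lh_sym: "loop_homotopic Y y0 f g \<Longrightarrow> loop_homotopic Y y0 g f"
  unfolding loop_homotopic_def using homotopic_with_sym by blast

lemma lh_trans: "loop_homotopic Y y0 f g \<Longrightarrow> loop_homotopic Y y0 g h \<Longrightarrow> loop_homotopic Y y0 f h"
  unfolding loop_homotopic_def using homotopic_with_trans by blast

lemma convex01:
  fixes s a b :: real
  assumes "s \<in> {0..1}" "a \<in> {0..1}" "b \<in> {0..1}"
  shows "(1 - s) * a + s * b \<in> {0..1}"
proof -
  have "(1-s)*a \<le> (1-s)*1" using assms by (intro mult_left_mono) auto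
  moreover have "s*b \<le> s*1" using assms by (intro mult_left_mono) auto
  moreover have "0 \<le> (1-s)*a" "0 \<le> s*b" using assms by auto
  ultimately show ?thesis by auto
qed

lemma lh_reparam:
  assumes ga: "\<gamma> \<in> loops Y y0" and g1: "g1 \<in> loops Y y0" and g2: "g2 \<in> loops Y y0"
    and c1: "continuous_on {0..1} ra" and c2: "continuous_on {0..1} rb"
    and i1: "\<And>t. t\<in>{0..1} \<Longrightarrow> ra t \<in> {0..1::real}"
    and i2: "\<And>t. t\<in>{0..1} \<Longrightarrow> rb t \<in> {0..1::real}"
    and e0: "ra 0 = rb 0" "ra 0 \<in> {0,1}" and e1: "ra 1 = rb 1" "ra 1 \<in> {0,1}"
    and q1: "\<And>t. t\<in>{0..1} \<Longrightarrow> g1 t = \<gamma> (ra t)"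
    and q2: "\<And>t. t\<in>{0..1} \<Longrightarrow> g2 t = \<gamma> (rb t)"
  shows "loop_homotopic Y y0 g1 g2"
proof (rule lhom_intro[OF g1 g2])
  let ?h = "\<lambda>z::real\<times>real. \<gamma> ((1 - fst z) * ra (snd z) + fst z * rb (snd z))"
  have s1: "continuous_on ({0..1}\<times>{0..1}) (\<lambda>z::real\<times>real. ra (snd z))"
    by (rule continuous_on_compose2[OF c1 continuous_on_snd]) auto
  have s2: "continuous_on ({0..1}\<times>{0..1}) (\<lambda>z::real\<times>real. rb (snd z))"
    by (rule continuous_on_compose2[OF c2 continuous_on_snd]) auto
  show "continuous_map (top_of_set ({0..1}\<times>{0..1})) Y ?h"
  proof (rule cm_reparam[OF loopsD(1)[OF ga]])
    show "continuous_on ({0..1}\<times>{0..1}) (\<lambda>z::real\<times>real. (1 - fst z) * ra (snd z) + fst z * rb (snd z))"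
      by (intro continuous_intros s1 s2)
    show "(1 - fst z) * ra (snd z) + fst z * rb (snd z) \<in> {0..1}" if "z \<in> {0..1}\<times>{0..1}" for z
      using that by (intro convex01 i1 i2) auto
  qed
  show "?h (0, t) = g1 t" if "t \<in> {0..1}" for t using q1[OF that] by simp
  show "?h (1, t) = g2 t" if "t \<in> {0..1}" for t using q2[OF that] by simp
  show "?h (s, 0) = y0 \<and> ?h (s, 1) = y0" if "s \<in> {0..1}" for s
  proof -
    have a: "(1 - s) * ra 0 + s * rb 0 = ra 0" using e0 by (simp add: algebra_simps)
    have b: "(1 - s) * ra 1 + s * rb 1 = ra 1" using e1 by (simp add: algebra_simps)
    show ?thesis using a b e0 e1 loopsD[OF ga] by auto
  qed
qed

lemma lh_homotopy:
  assumes "loop_homotopic Y y0 f g"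
  obtains k where "continuous_map (top_of_set ({0..1::real}\<times>{0..1::real})) Y k"
    "\<And>x. k (0, x) = f x" "\<And>x. k (1, x) = g x" "\<And>s. s\<in>{0..1} \<Longrightarrow> k (s, 0) = y0 \<and> k (s, 1) = y0"
  using assms unfolding loop_homotopic_def homotopic_with_def
  by (auto simp: prod_topology_subtopology_eu)

lemma lh_concat_cong:
  assumes F: "loop_homotopic Y y0 f f'" and G: "loop_homotopic Y y0 g g'"
  shows "loop_homotopic Y y0 (loop_concat f g) (loop_concat f' g')"
proof -
  obtain k1 where k1: "continuous_map (top_of_set ({0..1::real}\<times>{0..1::real})) Y k1"
    "\<And>x. k1 (0, x) = f x" "\<And>x. k1 (1, x) = f' x" "\<And>s. s\<in>{0..1} \<Longrightarrow> k1 (s, 0) = y0 \<and> k1 (s, 1) = y0"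
    using lh_homotopy[OF F] by blast
  obtain k2 where k2: "continuous_map (top_of_set ({0..1::real}\<times>{0..1::real})) Y k2"
    "\<And>x. k2 (0, x) = g x" "\<And>x. k2 (1, x) = g' x" "\<And>s. s\<in>{0..1} \<Longrightarrow> k2 (s, 0) = y0 \<and> k2 (s, 1) = y0"
    using lh_homotopy[OF G] by blast
  have L: "f \<in> loops Y y0" "f' \<in> loops Y y0" "g \<in> loops Y y0" "g' \<in> loops Y y0"
    using lh_loops[OF F] lh_loops[OF G] by auto
  let ?H = "\<lambda>z::real\<times>real. if snd z \<le> 1/2 then k1 (fst z, 2 * snd z) else k2 (fst z, 2 * snd z - 1)"
  show ?thesis
  proof (rule lhom_intro[OF concat_loops[OF L(1,3)] concat_loops[OF L(2,4)]])
    show "continuous_map (top_of_set ({0..1}\<times>{0..1})) Y ?H"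
    proof (rule cm_cases_le)
      show "continuous_on ({0..1}\<times>{0..1}) (\<lambda>z::real\<times>real. snd z)" by (intro continuous_intros)
      show "continuous_map (top_of_set {z \<in> {0..1}\<times>{0..1}. snd z \<le> 1/2}) Y (\<lambda>z::real\<times>real. k1 (fst z, 2 * snd z))"
        by (rule cm_reparam2[OF k1(1)]) (auto intro!: continuous_intros)
      show "continuous_map (top_of_set {z \<in> {0..1}\<times>{0..1}. 1/2 \<le> snd z}) Y (\<lambda>z::real\<times>real. k2 (fst z, 2 * snd z - 1))"
        by (rule cm_reparam2[OF k2(1)]) (auto intro!: continuous_intros)
      show "k1 (fst z, 2 * snd z) = k2 (fst z, 2 * snd z - 1)" if "z \<in> {0..1}\<times>{0..1}" "snd z = 1/2" for z
      proof -
        obtain a b where z: "z = (a, b)" by (cases z)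
        have "2 * b = 1" "2 * b - 1 = 0" "a \<in> {0..1}" using that z by auto
        then show ?thesis using k1(4)[of a] k2(4)[of a] z by simp
      qed
    qed
    show "?H (0, t) = loop_concat f g t" for t by (simp add: loop_concat_def k1 k2)
    show "?H (1, t) = loop_concat f' g' t" for t by (simp add: loop_concat_def k1 k2)
    show "?H (s, 0) = y0 \<and> ?H (s, 1) = y0" if "s \<in> {0..1}" for s
      using k1(4)[OF that] k2(4)[OF that] by simp
  qed
qed

lemma lh_rev_cong:
  assumes F: "loop_homotopic Y y0 f g"
  shows "loop_homotopic Y y0 (loop_reverse f) (loop_reverse g)"
proof -
  obtain k where k: "continuous_map (top_of_set ({0..1::real}\<times>{0..1::real})) Y k"
    "\<And>x. k (0, x) = f x" "\<And>x. k (1, x) = g x" "\<And>s. s\<in>{0..1} \<Longrightarrow> k (s, 0) = y0 \<and> k (s, 1) = y0"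
    using lh_homotopy[OF F] by blast
  have L: "f \<in> loops Y y0" "g \<in> loops Y y0" using lh_loops[OF F] by auto
  show ?thesis
  proof (rule lhom_intro[OF reverse_loops[OF L(1)] reverse_loops[OF L(2)]])
    show "continuous_map (top_of_set ({0..1}\<times>{0..1})) Y (\<lambda>z::real\<times>real. k (fst z, 1 - snd z))"
      by (rule cm_reparam2[OF k(1)]) (auto intro!: continuous_intros)
    show "(\<lambda>z::real\<times>real. k (fst z, 1 - snd z)) (0, t) = loop_reverse f t" for t by (simp add: loop_reverse_def k)
    show "(\<lambda>z::real\<times>real. k (fst z, 1 - snd z)) (1, t) = loop_reverse g t" for t by (simp add: loop_reverse_def k)
    show "(\<lambda>z::real\<times>real. k (fst z, 1 - snd z)) (s, 0) = y0 \<and> (\<lambda>z::real\<times>real. k (fst z, 1 - snd z)) (s, 1) = y0"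
      if "s \<in> {0..1}" for s using k(4)[OF that] by simp
  qed
qed

lemma concat_const_left:
  assumes f: "f \<in> loops Y y0"
  shows "loop_homotopic Y y0 (loop_concat (\<lambda>t. y0) f) f"
proof (rule lh_reparam[OF f _ f, where ra="\<lambda>t. max 0 (2*t - 1)" and rb="\<lambda>t. t"])
  have y: "y0 \<in> topspace Y" using loops_in_topspace[OF f, of 0] loopsD[OF f] by simp
  show "loop_concat (\<lambda>t. y0) f \<in> loops Y y0" by (rule concat_loops[OF const_loops[OF y] f])
  show "loop_concat (\<lambda>t. y0) f t = f (max 0 (2 * t - 1))" if "t \<in> {0..1}" for t
  proof (cases "t \<le> 1/2")
    case True
    then have "max 0 (2 * t - 1) = 0" by simp
    then show ?thesis using True loopsD[OF f] by (simp add: loop_concat_def)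
  next
    case False
    then have "max 0 (2 * t - 1) = 2 * t - 1" by simp
    then show ?thesis using False by (simp add: loop_concat_def)
  qed
  show "continuous_on {0..1} (\<lambda>t::real. max 0 (2*t - 1))" by (intro continuous_intros)
  show "continuous_on {0..1} (\<lambda>t::real. t)" by (intro continuous_intros)
qed auto

lemma concat_const_right:
  assumes f: "f \<in> loops Y y0"
  shows "loop_homotopic Y y0 (loop_concat f (\<lambda>t. y0)) f"
proof (rule lh_reparam[OF f _ f, where ra="\<lambda>t. min 1 (2*t)" and rb="\<lambda>t. t"])
  have y: "y0 \<in> topspace Y" using loops_in_topspace[OF f, of 0] loopsD[OF f] by simp
  show "loop_concat f (\<lambda>t. y0) \<in> loops Y y0" by (rule concat_loops[OF f const_loops[OF y]])
  show "loop_concat f (\<lambda>t. y0) t = f (min 1 (2 * t))" if "t \<in> {0..1}" for t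
  proof (cases "t \<le> 1/2")
    case True
    then have "min 1 (2 * t) = 2 * t" by simp
    then show ?thesis using True by (simp add: loop_concat_def)
  next
    case False
    then have "min 1 (2 * t) = 1" by simp
    then show ?thesis using False loopsD[OF f] by (simp add: loop_concat_def)
  qed
  show "continuous_on {0..1} (\<lambda>t::real. min 1 (2*t))" by (intro continuous_intros)
  show "continuous_on {0..1} (\<lambda>t::real. t)" by (intro continuous_intros)
qed auto

lemma concat_assoc:
  assumes f: "f \<in> loops Y y0" and g: "g \<in> loops Y y0" and h: "h \<in> loops Y y0"
  shows "loop_homotopic Y y0 (loop_concat (loop_concat f g) h) (loop_concat f (loop_concat g h))"
proof (rule lh_reparam[where \<gamma>="loop_concat f (loop_concat g h)"
      and ra="\<lambda>t. min (2*t) (min (t + 1/4) ((t+1)/2))" and rb="\<lambda>t. t"])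
  show "loop_concat f (loop_concat g h) \<in> loops Y y0"
    by (intro concat_loops f g h)
  show "loop_concat (loop_concat f g) h \<in> loops Y y0"
    by (intro concat_loops f g h)
  show "loop_concat (loop_concat f g) h t = loop_concat f (loop_concat g h) (min (2 * t) (min (t + 1 / 4) ((t + 1) / 2)))"
    if "t \<in> {0..1}" for t
  proof -
    consider "t \<le> 1/4" | "1/4 < t" "t \<le> 1/2" | "1/2 < t" by linarith
    then show ?thesis
    proof cases
      case 1
      then have m: "min (2 * t) (min (t + 1 / 4) ((t + 1) / 2)) = 2 * t" using that by auto
      show ?thesis unfolding m using 1 by (simp add: loop_concat_def)
    next
      case 2
      then have m: "min (2 * t) (min (t + 1 / 4) ((t + 1) / 2)) = t + 1/4" using that by auto
      have a: "2 * (2 * (t + 1/4) - 1) = 2 * (2 * t) - 1" by (simp add: algebra_simps)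
      show ?thesis unfolding m using 2 by (simp add: loop_concat_def a)
    next
      case 3
      then have m: "min (2 * t) (min (t + 1 / 4) ((t + 1) / 2)) = (t + 1)/2" using that by auto
      have a: "2 * ((t + 1) / 2) - 1 = t" by (simp add: algebra_simps)
      have "loop_concat f (loop_concat g h) ((t + 1)/2) = loop_concat g h (2 * ((t + 1) / 2) - 1)"
        using 3 by (simp add: loop_concat_def)
      also have "\<dots> = h (2 * t - 1)" unfolding a using 3 by (simp add: loop_concat_def)
      finally show ?thesis unfolding m using 3 by (simp add: loop_concat_def)
    qed
  qed
  show "continuous_on {0..1} (\<lambda>t::real. min (2*t) (min (t + 1/4) ((t+1)/2)))" by (intro continuous_intros) auto
  show "continuous_on {0..1} (\<lambda>t::real. t)" by (intro continuous_intros)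
qed (auto intro!: concat_loops f g h simp: min_le_iff_disj)

lemma concat_inverse:
  assumes f: "f \<in> loops Y y0"
  shows "loop_homotopic Y y0 (loop_concat f (loop_reverse f)) (\<lambda>t. y0)"
proof (rule lh_reparam[OF f, where ra="\<lambda>t. min (2*t) (2 - 2*t)" and rb="\<lambda>t. 0"])
  have y: "y0 \<in> topspace Y" using loops_in_topspace[OF f, of 0] loopsD[OF f] by simp
  show "(\<lambda>t. y0) \<in> loops Y y0" by (rule const_loops[OF y])
  show "loop_concat f (loop_reverse f) \<in> loops Y y0" by (intro concat_loops reverse_loops f)
  show "loop_concat f (loop_reverse f) t = f (min (2 * t) (2 - 2 * t))" if "t \<in> {0..1}" for t
  proof (cases "t \<le> 1/2")
    case True
    then have "min (2 * t) (2 - 2 * t) = 2 * t" by simp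
    then show ?thesis using True by (simp add: loop_concat_def)
  next
    case False
    then have "min (2 * t) (2 - 2 * t) = 2 - 2 * t" by simp
    moreover have "1 - (2 * t - 1) = 2 - 2 * t" by simp
    ultimately show ?thesis using False by (simp add: loop_concat_def loop_reverse_def)
  qed
  show "y0 = f 0" using loopsD[OF f] by simp
  show "continuous_on {0..1} (\<lambda>t::real. min (2*t) (2 - 2*t))" by (intro continuous_intros)
  show "continuous_on {0..1} (\<lambda>t::real. 0)" by (intro continuous_intros)
qed auto

lemma rev_rev [simp]: "loop_reverse (loop_reverse f) = f"
  by (simp add: loop_reverse_def)

lemma rev_const [simp]: "loop_reverse (\<lambda>t. y0) = (\<lambda>t. y0)"
  by (simp add: loop_reverse_def)

lemma rev_concat:
  assumes "f 1 = g 0"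
  shows "loop_reverse (loop_concat f g) = loop_concat (loop_reverse g) (loop_reverse f)"
proof
  fix t :: real
  consider "t < 1/2" | "t = 1/2" | "t > 1/2" by linarith
  then show "loop_reverse (loop_concat f g) t = loop_concat (loop_reverse g) (loop_reverse f) t"
  proof cases
    case 1
    have a: "2 * (1 - t) - 1 = 1 - 2 * t" by simp
    show ?thesis using 1 by (simp add: loop_concat_def loop_reverse_def a)
  next
    case 2
    show ?thesis using assms unfolding 2 by (simp add: loop_concat_def loop_reverse_def)
  next
    case 3
    have a: "1 - (2 * t - 1) = 2 * (1 - t)" by simp
    show ?thesis using 3 by (simp add: loop_concat_def loop_reverse_def a)
  qed
qed

lemma cancel_left:
  assumes f: "f \<in> loops Y y0" and g: "g \<in> loops Y y0"
  shows "loop_homotopic Y y0 (loop_concat (loop_reverse f) (loop_concat f g)) g"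
proof -
  have rf: "loop_reverse f \<in> loops Y y0" by (rule reverse_loops[OF f])
  have y: "y0 \<in> topspace Y" using loops_in_topspace[OF f, of 0] loopsD[OF f] by simp
  have 1: "loop_homotopic Y y0 (loop_concat (loop_reverse f) (loop_concat f g))
              (loop_concat (loop_concat (loop_reverse f) f) g)"
    by (rule lh_sym[OF concat_assoc[OF rf f g]])
  have 2: "loop_homotopic Y y0 (loop_concat (loop_concat (loop_reverse f) f) g) (loop_concat (\<lambda>t. y0) g)"
    using lh_concat_cong[OF concat_inverse[OF rf] lh_refl[OF g]] by simp
  show ?thesis
    by (rule lh_trans[OF 1 lh_trans[OF 2 concat_const_left[OF g]]])
qed

lemma comp_concat: "p \<circ> loop_concat f g = loop_concat (p \<circ> f) (p \<circ> g)"
  by (auto simp: loop_concat_def fun_eq_iff)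

lemma comp_rev: "p \<circ> loop_reverse f = loop_reverse (p \<circ> f)"
  by (auto simp: loop_reverse_def fun_eq_iff)

lemma comp_loops:
  assumes "continuous_map Y Z p" "p y0 = z0" "f \<in> loops Y y0"
  shows "p \<circ> f \<in> loops Z z0"
  using assms pathin_compose[of Y f Z p] unfolding loops_def by auto

lemma comp_lh:
  assumes "continuous_map Y Z p" "p y0 = z0" "loop_homotopic Y y0 f g"
  shows "loop_homotopic Z z0 (p \<circ> f) (p \<circ> g)"
proof -
  have hw: "homotopic_with (\<lambda>h. h 0 = y0 \<and> h 1 = y0) (top_of_set {0..1}) Y f g"
    using assms(3) by (simp add: loop_homotopic_def)
  have "homotopic_with (\<lambda>h. h 0 = z0 \<and> h 1 = z0) (top_of_set {0..1}) Z (p \<circ> f) (p \<circ> g)"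
    by (rule homotopic_with_compose_continuous_map_left[OF hw assms(1)]) (use assms(2) in auto)
  moreover have "p \<circ> f \<in> loops Z z0" "p \<circ> g \<in> loops Z z0"
    using comp_loops[OF assms(1,2)] lh_loops[OF assms(3)] by auto
  ultimately show ?thesis
    unfolding loop_homotopic_def by blast
qed

lemma class_eq:
  assumes "loop_homotopic Y y0 f g"
  shows "loop_class Y y0 f = loop_class Y y0 g"
proof -
  have "loop_homotopic Y y0 g h" if "loop_homotopic Y y0 f h" for h
    using lh_trans[OF lh_sym[OF assms] that] .
  moreover have "loop_homotopic Y y0 f h" if "loop_homotopic Y y0 g h" for h
    using lh_trans[OF assms that] .
  ultimately show ?thesis unfolding loop_class_def by auto
qed

lemma class_self: "f \<in> loops Y y0 \<Longrightarrow> f \<in> loop_class Y y0 f"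
  unfolding loop_class_def using lh_refl by (simp add: lh_refl)

lemma class_eqD:
  assumes "f \<in> loops Y y0" "loop_class Y y0 f = loop_class Y y0 g"
  shows "loop_homotopic Y y0 f g"
proof -
  have "f \<in> loop_class Y y0 g" using class_self[OF assms(1)] assms(2) by simp
  then show ?thesis unfolding loop_class_def by (simp add: lh_sym)
qed

lemma some_class: "f \<in> loops Y y0 \<Longrightarrow> loop_homotopic Y y0 (SOME h. h \<in> loop_class Y y0 f) f"
proof -
  assume f: "f \<in> loops Y y0"
  have "(SOME h. h \<in> loop_class Y y0 f) \<in> loop_class Y y0 f"
    by (rule someI[of "\<lambda>h. h \<in> loop_class Y y0 f" f, OF class_self[OF f]])
  then show ?thesis unfolding loop_class_def by (simp add: lh_sym)
qed

section \<open>Reduced words\<close>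

definition cancel :: "'g \<times> bool \<Rightarrow> 'g \<times> bool \<Rightarrow> bool" where
  "cancel a b \<longleftrightarrow> fst a = fst b \<and> snd a \<noteq> snd b"

fun red :: "('g \<times> bool) list \<Rightarrow> bool" where
  "red [] = True"
| "red [a] = True"
| "red (a # b # w) = (\<not> cancel a b \<and> red (b # w))"

lemma red_tl: "red (b # w) \<Longrightarrow> red w"
  by (cases w) auto

lemma push_letter_eq: "push_letter a w = (case w of [] \<Rightarrow> [a] | b # ws \<Rightarrow> if cancel a b then ws else a # b # ws)"
  by (cases w) (auto simp: cancel_def)

lemma red_push: "red w \<Longrightarrow> red (push_letter a w)"
  by (cases w) (auto simp: push_letter_eq dest: red_tl)

lemma free_reduce_Nil [simp]: "free_reduce [] = []"
  by (simp add: free_reduce_def)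

lemma free_reduce_Cons [simp]: "free_reduce (a # w) = push_letter a (free_reduce w)"
  by (simp add: free_reduce_def)

lemma red_reduce: "red (free_reduce w)"
  by (induction w) (auto intro: red_push)

lemma reduce_red: "red w \<Longrightarrow> free_reduce w = w"
proof (induction w)
  case Nil then show ?case by simp
next
  case (Cons a w)
  then have "free_reduce w = w" using red_tl by blast
  then show ?case using Cons.prems by (cases w) (auto simp: push_letter_eq)
qed

lemma set_push: "set (push_letter a w) \<subseteq> insert a (set w)"
  by (cases w) (auto simp: push_letter_eq)

lemma set_reduce: "set (free_reduce w) \<subseteq> set w"
proof (induction w)
  case Nil then show ?case by simp
next
  case (Cons a w) then show ?case using set_push[of a "free_reduce w"] by auto
qed

lemma red_snoc: "red (xs @ [a]) \<longleftrightarrow> red xs \<and> (xs = [] \<or> \<not> cancel (last xs) a)"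
proof (induction xs)
  case Nil then show ?case by simp
next
  case (Cons x xs)
  then show ?case by (cases xs) auto
qed

definition flipl :: "'g \<times> bool \<Rightarrow> 'g \<times> bool" where
  "flipl a = (fst a, \<not> snd a)"

lemma free_inv_alt: "free_inv w = rev (map flipl w)"
  by (simp add: free_inv_def flipl_def case_prod_unfold)

lemma cancel_flip: "cancel (flipl b) (flipl a) \<longleftrightarrow> cancel a b"
  by (auto simp: cancel_def flipl_def)

lemma red_inv: "red v \<Longrightarrow> red (rev (map flipl v))"
proof (induction v)
  case Nil then show ?case by simp
next
  case (Cons a v)
  have rv: "red v" using Cons.prems red_tl by blast
  have "v = [] \<or> \<not> cancel (last (rev (map flipl v))) (flipl a)"
  proof (cases v)
    case (Cons b vs)
    then have "\<not> cancel a b" using Cons.prems by simp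
    then show ?thesis using Cons by (simp add: last_rev cancel_flip)
  qed simp
  then show ?case using Cons.IH[OF rv] by (auto simp: red_snoc)
qed

lemma mult_carrier:
  assumes "v \<in> free_group_carrier S" "w \<in> free_group_carrier S"
  shows "free_mult v w \<in> free_group_carrier S"
proof -
  have "fst ` set (free_reduce (v @ w)) \<subseteq> fst ` set (v @ w)" by (rule image_mono[OF set_reduce])
  also have "\<dots> \<subseteq> S" using assms unfolding free_group_carrier_def by auto
  finally show ?thesis using reduce_red[OF red_reduce[of "v @ w"]]
    unfolding free_group_carrier_def free_mult_def by auto
qed

lemma inv_carrier:
  assumes "v \<in> free_group_carrier S"
  shows "free_inv v \<in> free_group_carrier S"
proof -
  have "red v" using assms red_reduce[of v] unfolding free_group_carrier_def by auto
  then have "red (free_inv v)" unfolding free_inv_alt by (rule red_inv)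
  then show ?thesis using assms unfolding free_group_carrier_def
    by (auto simp: free_inv_alt flipl_def reduce_red)
qed

lemma gen_carrier: "g \<in> S \<Longrightarrow> free_gen g \<in> free_group_carrier S"
  by (simp add: free_group_carrier_def free_gen_def)

section \<open>Word loops\<close>

definition lrep :: "'b set \<Rightarrow> 'b" where
  "lrep C = (SOME f. f \<in> C)"

definition letter_loop :: "(real \<Rightarrow> 'a) set \<times> bool \<Rightarrow> real \<Rightarrow> 'a" where
  "letter_loop a = (if snd a then lrep (fst a) else loop_reverse (lrep (fst a)))"

fun wloop :: "'a \<Rightarrow> ((real \<Rightarrow> 'a) set \<times> bool) list \<Rightarrow> real \<Rightarrow> 'a" where
  "wloop x0 [] = (\<lambda>t. x0)"
| "wloop x0 (a # w) = loop_concat (letter_loop a) (wloop x0 w)"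

lemma carrier_rep:
  assumes "C \<in> pi1_carrier X x0"
  shows "lrep C \<in> loops X x0" "C = loop_class X x0 (lrep C)"
proof -
  obtain \<alpha> where a: "\<alpha> \<in> loops X x0" "C = loop_class X x0 \<alpha>"
    using assms unfolding pi1_carrier_def by auto
  have h: "loop_homotopic X x0 (lrep C) \<alpha>" unfolding lrep_def a(2) by (rule some_class[OF a(1)])
  then show "lrep C \<in> loops X x0" using lh_loops[OF h] by simp
  show "C = loop_class X x0 (lrep C)" using class_eq[OF h] a(2) by simp
qed

lemma letter_loops: "fst a \<in> pi1_carrier X x0 \<Longrightarrow> letter_loop a \<in> loops X x0"
  using carrier_rep(1)[of "fst a" X x0] reverse_loops[OF carrier_rep(1)[of "fst a" X x0]]
  by (auto simp: letter_loop_def)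

lemma wloop_loops:
  assumes "x0 \<in> topspace X" "fst ` set w \<subseteq> pi1_carrier X x0"
  shows "wloop x0 w \<in> loops X x0"
  using assms(2)
proof (induction w)
  case Nil then show ?case using const_loops[OF assms(1)] by simp
next
  case (Cons a w) then show ?case by (auto intro!: concat_loops letter_loops)
qed

lemma letter_loop_cancel: "cancel a b \<Longrightarrow> letter_loop a = loop_reverse (letter_loop b)"
  by (cases "snd b") (auto simp: cancel_def letter_loop_def)

lemma letter_loop_flip: "letter_loop (flipl a) = loop_reverse (letter_loop a)"
  by (cases "snd a") (auto simp: flipl_def letter_loop_def)

context
  fixes X :: "'a topology" and x0 :: 'a
  assumes x0: "x0 \<in> topspace X"
begin

lemma push_lh:
  assumes "fst a \<in> pi1_carrier X x0" "fst ` set w \<subseteq> pi1_carrier X x0"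
  shows "loop_homotopic X x0 (wloop x0 (push_letter a w)) (loop_concat (letter_loop a) (wloop x0 w))"
proof (cases w)
  case Nil
  then show ?thesis using wloop_loops[OF x0, of "[a]"] assms by (simp add: lh_refl)
next
  case (Cons b ws)
  have lb: "letter_loop b \<in> loops X x0" using assms Cons by (auto intro: letter_loops)
  have lw: "wloop x0 ws \<in> loops X x0" using assms Cons by (auto intro: wloop_loops[OF x0])
  show ?thesis
  proof (cases "cancel a b")
    case True
    have "loop_homotopic X x0 (loop_concat (loop_reverse (letter_loop b)) (loop_concat (letter_loop b) (wloop x0 ws))) (wloop x0 ws)"
      by (rule cancel_left[OF lb lw])
    then show ?thesis using True Cons letter_loop_cancel[OF True] by (simp add: push_letter_eq lh_sym)
  next
    case False
    then show ?thesis using Cons wloop_loops[OF x0, of "a # w"] assms by (simp add: push_letter_eq lh_refl)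
  qed
qed

lemma reduce_lh:
  assumes "fst ` set w \<subseteq> pi1_carrier X x0"
  shows "loop_homotopic X x0 (wloop x0 (free_reduce w)) (wloop x0 w)"
  using assms
proof (induction w)
  case Nil then show ?case using wloop_loops[OF x0, of "[]"] by (simp add: lh_refl)
next
  case (Cons a w)
  have sw: "fst ` set (free_reduce w) \<subseteq> pi1_carrier X x0" using Cons.prems set_reduce[of w] by auto
  have 1: "loop_homotopic X x0 (wloop x0 (push_letter a (free_reduce w))) (loop_concat (letter_loop a) (wloop x0 (free_reduce w)))"
    using push_lh[OF _ sw] Cons.prems by auto
  have 2: "loop_homotopic X x0 (loop_concat (letter_loop a) (wloop x0 (free_reduce w))) (loop_concat (letter_loop a) (wloop x0 w))"
    using lh_concat_cong[OF lh_refl[OF letter_loops] Cons.IH] Cons.prems by auto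
  show ?case using lh_trans[OF 1 2] by simp
qed

lemma append_lh:
  assumes "fst ` set v \<subseteq> pi1_carrier X x0" "fst ` set w \<subseteq> pi1_carrier X x0"
  shows "loop_homotopic X x0 (wloop x0 (v @ w)) (loop_concat (wloop x0 v) (wloop x0 w))"
  using assms(1)
proof (induction v)
  case Nil then show ?case using lh_sym[OF concat_const_left[OF wloop_loops[OF x0 assms(2)]]] by simp
next
  case (Cons a v)
  have la: "letter_loop a \<in> loops X x0" using Cons.prems by (auto intro: letter_loops)
  have lv: "wloop x0 v \<in> loops X x0" using Cons.prems by (auto intro: wloop_loops[OF x0])
  have lw: "wloop x0 w \<in> loops X x0" by (rule wloop_loops[OF x0 assms(2)])
  have 1: "loop_homotopic X x0 (loop_concat (letter_loop a) (wloop x0 (v @ w)))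
             (loop_concat (letter_loop a) (loop_concat (wloop x0 v) (wloop x0 w)))"
    using lh_concat_cong[OF lh_refl[OF la] Cons.IH] Cons.prems by auto
  have 2: "loop_homotopic X x0 (loop_concat (letter_loop a) (loop_concat (wloop x0 v) (wloop x0 w)))
             (loop_concat (loop_concat (letter_loop a) (wloop x0 v)) (wloop x0 w))"
    by (rule lh_sym[OF concat_assoc[OF la lv lw]])
  show ?case using lh_trans[OF 1 2] by simp
qed

lemma inv_lh:
  assumes "fst ` set w \<subseteq> pi1_carrier X x0"
  shows "loop_homotopic X x0 (wloop x0 (free_inv w)) (loop_reverse (wloop x0 w))"
  using assms
proof (induction w)
  case Nil then show ?case using lh_refl[OF const_loops[OF x0]] by (simp add: free_inv_def)
next
  case (Cons a w)
  have la: "letter_loop a \<in> loops X x0" using Cons.prems by (auto intro: letter_loops)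
  have lw: "wloop x0 w \<in> loops X x0" using Cons.prems by (auto intro: wloop_loops[OF x0])
  have fi: "free_inv (a # w) = free_inv w @ [flipl a]" by (simp add: free_inv_alt)
  have si: "fst ` set (free_inv w) \<subseteq> pi1_carrier X x0" using Cons.prems by (auto simp: free_inv_alt flipl_def)
  have sa: "fst ` set [flipl a] \<subseteq> pi1_carrier X x0" using Cons.prems by (auto simp: flipl_def)
  have 1: "loop_homotopic X x0 (wloop x0 (free_inv w @ [flipl a])) (loop_concat (wloop x0 (free_inv w)) (wloop x0 [flipl a]))"
    by (rule append_lh[OF si sa])
  have 3: "loop_homotopic X x0 (wloop x0 [flipl a]) (loop_reverse (letter_loop a))"
    using concat_const_right[OF reverse_loops[OF la]] by (simp add: letter_loop_flip)
  have 2: "loop_homotopic X x0 (loop_concat (wloop x0 (free_inv w)) (wloop x0 [flipl a]))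
            (loop_concat (loop_reverse (wloop x0 w)) (loop_reverse (letter_loop a)))"
    using lh_concat_cong[OF Cons.IH 3] Cons.prems by auto
  have e: "loop_reverse (loop_concat (letter_loop a) (wloop x0 w)) = loop_concat (loop_reverse (wloop x0 w)) (loop_reverse (letter_loop a))"
    by (rule rev_concat) (use loopsD[OF la] loopsD[OF lw] in simp)
  show ?case unfolding fi using lh_trans[OF 1 2] e by simp
qed

lemma wp_class:
  assumes "fst ` set w \<subseteq> pi1_carrier X x0"
  shows "word_product (pi1_mult X x0) (pi1_inv X x0) (pi1_one X x0) w = loop_class X x0 (wloop x0 w)"
  using assms
proof (induction w)
  case Nil then show ?case by (simp add: word_product_def pi1_one_def)
next
  case (Cons a w)
  have la: "letter_loop a \<in> loops X x0" using Cons.prems by (auto intro: letter_loops)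
  have lw: "wloop x0 w \<in> loops X x0" using Cons.prems by (auto intro: wloop_loops[OF x0])
  have IH: "word_product (pi1_mult X x0) (pi1_inv X x0) (pi1_one X x0) w = loop_class X x0 (wloop x0 w)"
    using Cons by auto
  define A where "A = (if snd a then fst a else pi1_inv X x0 (fst a))"
  have wp: "word_product (pi1_mult X x0) (pi1_inv X x0) (pi1_one X x0) (a # w)
      = pi1_mult X x0 A (word_product (pi1_mult X x0) (pi1_inv X x0) (pi1_one X x0) w)"
    by (simp add: word_product_def A_def case_prod_unfold)
  have hA: "loop_homotopic X x0 (SOME f. f \<in> A) (letter_loop a)"
  proof (cases "snd a")
    case True
    then show ?thesis using la by (simp add: A_def letter_loop_def lrep_def lh_refl)
  next
    case False
    then have "A = loop_class X x0 (letter_loop a)"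
      by (simp add: A_def letter_loop_def pi1_inv_def lrep_def)
    then show ?thesis using some_class[OF la] by simp
  qed
  have hB: "loop_homotopic X x0 (SOME f. f \<in> loop_class X x0 (wloop x0 w)) (wloop x0 w)"
    by (rule some_class[OF lw])
  have "pi1_mult X x0 A (loop_class X x0 (wloop x0 w)) = loop_class X x0 (loop_concat (letter_loop a) (wloop x0 w))"
    unfolding pi1_mult_def using class_eq[OF lh_concat_cong[OF hA hB]] by simp
  then show ?case using wp IH by simp
qed

end

section \<open>The nerve\<close>

lemma openin_nerve_top:
  "openin (nerve_top U) W \<longleftrightarrow> W \<subseteq> nerve_points U \<and>
     (\<forall>t\<in>W. \<exists>e>0. \<forall>s\<in>nerve_points U. l1_dist t s < e \<longrightarrow> s \<in> W)"
proof -
  have "istopology (\<lambda>W. W \<subseteq> nerve_points U \<and>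
     (\<forall>t\<in>W. \<exists>e>0. \<forall>s\<in>nerve_points U. l1_dist t s < e \<longrightarrow> s \<in> W))"
    unfolding istopology_def
  proof (rule conjI; intro allI impI)
    fix S T :: "('a set \<Rightarrow> real) set"
    assume S: "S \<subseteq> nerve_points U \<and> (\<forall>t\<in>S. \<exists>e>0. \<forall>s\<in>nerve_points U. l1_dist t s < e \<longrightarrow> s \<in> S)"
      and T: "T \<subseteq> nerve_points U \<and> (\<forall>t\<in>T. \<exists>e>0. \<forall>s\<in>nerve_points U. l1_dist t s < e \<longrightarrow> s \<in> T)"
    show "S \<inter> T \<subseteq> nerve_points U \<and> (\<forall>t\<in>S \<inter> T. \<exists>e>0. \<forall>s\<in>nerve_points U. l1_dist t s < e \<longrightarrow> s \<in> S \<inter> T)"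
    proof (intro conjI ballI)
      show "S \<inter> T \<subseteq> nerve_points U" using S by auto
      fix t assume "t \<in> S \<inter> T"
      then obtain e1 e2 where "e1 > 0" "\<forall>s\<in>nerve_points U. l1_dist t s < e1 \<longrightarrow> s \<in> S"
        "e2 > 0" "\<forall>s\<in>nerve_points U. l1_dist t s < e2 \<longrightarrow> s \<in> T"
        using S T by blast
      then show "\<exists>e>0. \<forall>s\<in>nerve_points U. l1_dist t s < e \<longrightarrow> s \<in> S \<inter> T"
        by (intro exI[of _ "min e1 e2"]) auto
    qed
  next
    fix K :: "('a set \<Rightarrow> real) set set"
    assume K: "\<forall>S\<in>K. S \<subseteq> nerve_points U \<and> (\<forall>t\<in>S. \<exists>e>0. \<forall>s\<in>nerve_points U. l1_dist t s < e \<longrightarrow> s \<in> S)"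
    show "\<Union>K \<subseteq> nerve_points U \<and> (\<forall>t\<in>\<Union>K. \<exists>e>0. \<forall>s\<in>nerve_points U. l1_dist t s < e \<longrightarrow> s \<in> \<Union>K)"
    proof (intro conjI ballI)
      show "\<Union>K \<subseteq> nerve_points U" using K by auto
      fix t assume "t \<in> \<Union>K"
      then obtain S where "S \<in> K" "t \<in> S" by auto
      then obtain e where "e > 0" "\<forall>s\<in>nerve_points U. l1_dist t s < e \<longrightarrow> s \<in> S" using K by blast
      then show "\<exists>e>0. \<forall>s\<in>nerve_points U. l1_dist t s < e \<longrightarrow> s \<in> \<Union>K"
        using \<open>S \<in> K\<close> by blast
    qed
  qed
  then show ?thesis unfolding nerve_top_def by simp
qed

lemma topspace_nerve_top: "topspace (nerve_top U) = nerve_points U"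
proof
  show "topspace (nerve_top U) \<subseteq> nerve_points U"
    unfolding topspace_def using openin_nerve_top by blast
  have "openin (nerve_top U) (nerve_points U)"
    unfolding openin_nerve_top by (auto intro: exI[of _ 1])
  then show "nerve_points U \<subseteq> topspace (nerve_top U)" by (rule openin_subset)
qed

definition lcont :: "'b topology \<Rightarrow> 'a set set \<Rightarrow> ('b \<Rightarrow> 'a set \<Rightarrow> real) \<Rightarrow> bool" where
  "lcont Z U f \<longleftrightarrow> (\<forall>z\<in>topspace Z. f z \<in> nerve_points U) \<and>
     (\<forall>z\<in>topspace Z. \<forall>e>0. \<exists>Q. openin Z Q \<and> z \<in> Q \<and> (\<forall>z'\<in>Q. l1_dist (f z) (f z') < e))"

lemma lcont_cm:
  assumes "lcont Z U f"
  shows "continuous_map Z (nerve_top U) f"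
  unfolding continuous_map_def
proof (intro conjI allI impI)
  show "f \<in> topspace Z \<rightarrow> topspace (nerve_top U)"
    using assms by (auto simp: lcont_def topspace_nerve_top)
  fix W assume W: "openin (nerve_top U) W"
  show "openin Z {x \<in> topspace Z. f x \<in> W}"
  proof (subst openin_subopen, intro ballI)
    fix z assume z: "z \<in> {x \<in> topspace Z. f x \<in> W}"
    then obtain e where e: "e > 0" "\<forall>s\<in>nerve_points U. l1_dist (f z) s < e \<longrightarrow> s \<in> W"
      using W unfolding openin_nerve_top by blast
    obtain Q where Q: "openin Z Q" "z \<in> Q" "\<forall>z'\<in>Q. l1_dist (f z) (f z') < e"
      using assms e(1) z unfolding lcont_def by blast
    have "Q \<subseteq> {x \<in> topspace Z. f x \<in> W}"
    proof
      fix z' assume "z' \<in> Q"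
      then have "z' \<in> topspace Z" using openin_subset[OF Q(1)] by auto
      then show "z' \<in> {x \<in> topspace Z. f x \<in> W}"
        using e Q \<open>z' \<in> Q\<close> assms unfolding lcont_def by auto
    qed
    then show "\<exists>T. openin Z T \<and> z \<in> T \<and> T \<subseteq> {x \<in> topspace Z. f x \<in> W}"
      using Q by blast
  qed
qed

lemma lcont_compose:
  assumes f: "lcont Y U f" and g: "continuous_map Z Y g"
  shows "lcont Z U (\<lambda>z. f (g z))"
  unfolding lcont_def
proof (intro conjI ballI allI impI)
  fix z assume z: "z \<in> topspace Z"
  then have gz: "g z \<in> topspace Y" using g by (auto simp: continuous_map_def)
  then show "f (g z) \<in> nerve_points U" using f by (auto simp: lcont_def)
  fix e :: real assume e: "e > 0"
  obtain Q where Q: "openin Y Q" "g z \<in> Q" "\<forall>y'\<in>Q. l1_dist (f (g z)) (f y') < e"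
    using f gz e unfolding lcont_def by blast
  show "\<exists>Q. openin Z Q \<and> z \<in> Q \<and> (\<forall>z'\<in>Q. l1_dist (f (g z)) (f (g z')) < e)"
    by (rule exI[of _ "{x \<in> topspace Z. g x \<in> Q}"])
      (use Q z openin_continuous_map_preimage[OF g Q(1)] in auto)
qed

lemma l1_superset:
  assumes "finite A" "fsupp s \<union> fsupp t \<subseteq> A"
  shows "l1_dist s t = (\<Sum>V\<in>A. \<bar>s V - t V\<bar>)"
  unfolding l1_dist_def
  by (rule sum.mono_neutral_left[OF assms]) (auto simp: fsupp_def)

lemma NP_sum:
  assumes "s \<in> nerve_points U" "finite A" "fsupp s \<subseteq> A"
  shows "(\<Sum>V\<in>A. s V) = 1"
proof -
  have "(\<Sum>V\<in>fsupp s. s V) = 1" using assms(1) by (simp add: nerve_points_def)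
  moreover have "(\<Sum>V\<in>fsupp s. s V) = (\<Sum>V\<in>A. s V)"
    by (rule sum.mono_neutral_left[OF assms(2,3)]) (auto simp: fsupp_def)
  ultimately show ?thesis by simp
qed

lemma NP_nonneg: "s \<in> nerve_points U \<Longrightarrow> 0 \<le> s V"
  by (simp add: nerve_points_def)

lemma NP_finite: "s \<in> nerve_points U \<Longrightarrow> finite (fsupp s)"
  by (simp add: nerve_points_def)

definition combo :: "real \<Rightarrow> ('v \<Rightarrow> real) \<Rightarrow> ('v \<Rightarrow> real) \<Rightarrow> 'v \<Rightarrow> real" where
  "combo c a b = (\<lambda>V. (1 - c) * a V + c * b V)"

lemma combo_pt:
  fixes c c' x y x' y' :: real
  assumes "c \<in> {0..1}" "c' \<in> {0..1}" "0 \<le> x'" "0 \<le> y'"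
  shows "\<bar>((1 - c) * x + c * y) - ((1 - c') * x' + c' * y')\<bar> \<le> \<bar>x - x'\<bar> + \<bar>y - y'\<bar> + \<bar>c - c'\<bar> * (x' + y')"
proof -
  have eq: "((1 - c) * x + c * y) - ((1 - c') * x' + c' * y') = (1 - c) * (x - x') + c * (y - y') + (c' - c) * (x' - y')"
    by (simp add: algebra_simps)
  have 1: "\<bar>(1 - c) * (x - x')\<bar> \<le> \<bar>x - x'\<bar>"
  proof -
    have "\<bar>(1 - c) * (x - x')\<bar> = (1 - c) * \<bar>x - x'\<bar>" using assms(1) by (simp add: abs_mult)
    also have "\<dots> \<le> \<bar>x - x'\<bar>" using assms(1) by (intro mult_left_le_one_le) auto
    finally show ?thesis .
  qed
  have 2: "\<bar>c * (y - y')\<bar> \<le> \<bar>y - y'\<bar>"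
  proof -
    have "\<bar>c * (y - y')\<bar> = c * \<bar>y - y'\<bar>" using assms(1) by (simp add: abs_mult)
    also have "\<dots> \<le> \<bar>y - y'\<bar>" using assms(1) by (intro mult_left_le_one_le) auto
    finally show ?thesis .
  qed
  have 3: "\<bar>(c' - c) * (x' - y')\<bar> \<le> \<bar>c - c'\<bar> * (x' + y')"
  proof -
    have "\<bar>(c' - c) * (x' - y')\<bar> = \<bar>c - c'\<bar> * \<bar>x' - y'\<bar>" by (simp add: abs_mult abs_minus_commute)
    also have "\<dots> \<le> \<bar>c - c'\<bar> * (x' + y')" using assms(3,4) by (intro mult_left_mono) auto
    finally show ?thesis .
  qed
  show ?thesis unfolding eq using 1 2 3 abs_triangle_ineq[of "(1 - c) * (x - x') + c * (y - y')" "(c' - c) * (x' - y')"]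
    abs_triangle_ineq[of "(1 - c) * (x - x')" "c * (y - y')"] by linarith
qed

lemma fsupp_combo: "fsupp (combo c a b) \<subseteq> fsupp a \<union> fsupp b"
  by (auto simp: fsupp_def combo_def)

lemma combo_l1:
  assumes a: "a \<in> nerve_points U" and a': "a' \<in> nerve_points U"
    and b: "b \<in> nerve_points U" and b': "b' \<in> nerve_points U"
    and c: "c \<in> {0..1}" and c': "c' \<in> {0..1}"
  shows "l1_dist (combo c a b) (combo c' a' b') \<le> 2 * \<bar>c - c'\<bar> + l1_dist a a' + l1_dist b b'"
proof -
  define A where "A = fsupp a \<union> fsupp a' \<union> fsupp b \<union> fsupp b'"
  have fA: "finite A" using a a' b b' by (simp add: A_def NP_finite)
  have e1: "l1_dist (combo c a b) (combo c' a' b') = (\<Sum>V\<in>A. \<bar>combo c a b V - combo c' a' b' V\<bar>)"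
    by (rule l1_superset[OF fA]) (use fsupp_combo[of c a b] fsupp_combo[of c' a' b'] in \<open>auto simp: A_def\<close>)
  have e2: "l1_dist a a' = (\<Sum>V\<in>A. \<bar>a V - a' V\<bar>)" by (rule l1_superset[OF fA]) (auto simp: A_def)
  have e3: "l1_dist b b' = (\<Sum>V\<in>A. \<bar>b V - b' V\<bar>)" by (rule l1_superset[OF fA]) (auto simp: A_def)
  have s1: "(\<Sum>V\<in>A. a' V) = 1" by (rule NP_sum[OF a' fA]) (auto simp: A_def)
  have s2: "(\<Sum>V\<in>A. b' V) = 1" by (rule NP_sum[OF b' fA]) (auto simp: A_def)
  have "(\<Sum>V\<in>A. \<bar>combo c a b V - combo c' a' b' V\<bar>)
      \<le> (\<Sum>V\<in>A. \<bar>a V - a' V\<bar> + \<bar>b V - b' V\<bar> + \<bar>c - c'\<bar> * (a' V + b' V))"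
    by (rule sum_mono) (unfold combo_def, rule combo_pt[OF c c' NP_nonneg[OF a'] NP_nonneg[OF b']])
  also have "\<dots> = l1_dist a a' + l1_dist b b' + \<bar>c - c'\<bar> * ((\<Sum>V\<in>A. a' V) + (\<Sum>V\<in>A. b' V))"
    by (simp add: e2 e3 sum.distrib sum_distrib_left[symmetric])
  also have "\<dots> = 2 * \<bar>c - c'\<bar> + l1_dist a a' + l1_dist b b'"
    by (simp add: s1 s2)
  finally show ?thesis using e1 by simp
qed

lemma combo_NP:
  assumes a: "a \<in> nerve_points U" and b: "b \<in> nerve_points U" and sub: "fsupp b \<subseteq> fsupp a"
    and c: "c \<in> {0..1}"
  shows "combo c a b \<in> nerve_points U"
proof -
  have fs: "fsupp (combo c a b) \<subseteq> fsupp a" using fsupp_combo[of c a b] sub by auto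
  have fa: "finite (fsupp a)" using a by (simp add: NP_finite)
  have nn: "0 \<le> combo c a b V" for V
    using c NP_nonneg[OF a, of V] NP_nonneg[OF b, of V] by (simp add: combo_def)
  have "\<Inter>(fsupp a) \<subseteq> \<Inter>(fsupp (combo c a b))" using fs by auto
  moreover have "\<Inter>(fsupp a) \<noteq> {}" using a by (simp add: nerve_points_def)
  ultimately have ne: "\<Inter>(fsupp (combo c a b)) \<noteq> {}" by auto
  have "(\<Sum>V\<in>fsupp (combo c a b). combo c a b V) = (\<Sum>V\<in>fsupp a. combo c a b V)"
    by (rule sum.mono_neutral_left[OF fa fs]) (auto simp: fsupp_def)
  also have "\<dots> = (1 - c) * (\<Sum>V\<in>fsupp a. a V) + c * (\<Sum>V\<in>fsupp a. b V)"
    by (simp add: combo_def sum.distrib sum_distrib_left)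
  also have "\<dots> = 1"
    using NP_sum[OF a fa] NP_sum[OF b fa sub] by simp
  finally have "(\<Sum>V\<in>fsupp (combo c a b). combo c a b V) = 1" .
  moreover have "fsupp (combo c a b) \<subseteq> U" using fs a by (auto simp: nerve_points_def)
  moreover have "finite (fsupp (combo c a b))" using fs fa finite_subset by blast
  ultimately show ?thesis using nn ne unfolding nerve_points_def by blast
qed

section \<open>The canonical map\<close>

context
  fixes X :: "'a topology" and x0 :: 'a and U :: "'a set set" and U0 :: "'a set"
    and \<phi> :: "'a set \<Rightarrow> 'a \<Rightarrow> real"
  assumes x0: "x0 \<in> topspace X" and poc: "pointed_open_cover X x0 U U0"
    and pou: "partition_of_unity X U \<phi>"
begin

lemma phi_cont: "V \<in> U \<Longrightarrow> continuous_map X euclideanreal (\<phi> V)"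
  using pou by (simp add: partition_of_unity_def)

lemma phi_nonneg: "x \<in> topspace X \<Longrightarrow> 0 \<le> \<phi> V x"
  using pou by (simp add: partition_of_unity_def)

lemma phi_supp:
  assumes "x \<in> topspace X" "\<phi> V x \<noteq> 0"
  shows "V \<in> U" "x \<in> V"
proof -
  show VU: "V \<in> U" using pou assms by (auto simp: partition_of_unity_def)
  have "x \<in> {y \<in> topspace X. \<phi> V y \<noteq> 0}" using assms by simp
  also have "\<dots> \<subseteq> X closure_of {y \<in> topspace X. \<phi> V y \<noteq> 0}" by (rule closure_of_subset) auto
  also have "\<dots> \<subseteq> V" using pou VU by (simp add: partition_of_unity_def)
  finally show "x \<in> V" .
qed

lemma phi_lf:
  assumes "x \<in> topspace X"
  obtains W where "openin X W" "x \<in> W" "finite {V\<in>U. \<exists>y\<in>W. \<phi> V y \<noteq> 0}"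
  using pou assms by (auto simp: partition_of_unity_def)

lemma phi_sum: "x \<in> topspace X \<Longrightarrow> (\<Sum>V\<in>{V\<in>U. \<phi> V x \<noteq> 0}. \<phi> V x) = 1"
  using pou by (simp add: partition_of_unity_def)

lemma fsupp_p: "fsupp (canonical_map \<phi> x) = {V. \<phi> V x \<noteq> 0}"
  by (simp add: fsupp_def canonical_map_def)

lemma fsupp_p_eq: "x \<in> topspace X \<Longrightarrow> fsupp (canonical_map \<phi> x) = {V\<in>U. \<phi> V x \<noteq> 0}"
  using phi_supp(1) by (auto simp: fsupp_p)

lemma p_mem: "x \<in> topspace X \<Longrightarrow> x \<in> \<Inter>(fsupp (canonical_map \<phi> x))"
  using phi_supp(2) by (auto simp: fsupp_p)

lemma p_NP:
  assumes x: "x \<in> topspace X"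
  shows "canonical_map \<phi> x \<in> nerve_points U"
proof -
  obtain W where W: "openin X W" "x \<in> W" "finite {V\<in>U. \<exists>y\<in>W. \<phi> V y \<noteq> 0}"
    using phi_lf[OF x] by blast
  have "fsupp (canonical_map \<phi> x) \<subseteq> {V\<in>U. \<exists>y\<in>W. \<phi> V y \<noteq> 0}"
    using W(2) fsupp_p_eq[OF x] by auto
  then have fin: "finite (fsupp (canonical_map \<phi> x))" using W(3) finite_subset by blast
  have "\<forall>V. 0 \<le> canonical_map \<phi> x V" using phi_nonneg[OF x] by (simp add: canonical_map_def)
  moreover have "fsupp (canonical_map \<phi> x) \<subseteq> U" using fsupp_p_eq[OF x] by auto
  moreover have "\<Inter>(fsupp (canonical_map \<phi> x)) \<noteq> {}" using p_mem[OF x] by auto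
  moreover have "(\<Sum>V\<in>fsupp (canonical_map \<phi> x). canonical_map \<phi> x V) = 1"
    using phi_sum[OF x] fsupp_p_eq[OF x] by (simp add: canonical_map_def)
  ultimately show ?thesis using fin unfolding nerve_points_def by blast
qed

lemma phi_x0: "\<phi> V x0 \<noteq> 0 \<Longrightarrow> V = U0"
  using phi_supp[OF x0] poc unfolding pointed_open_cover_def by blast

lemma p_x0: "canonical_map \<phi> x0 = nerve_vertex U0"
proof -
  have sub: "{V\<in>U. \<phi> V x0 \<noteq> 0} \<subseteq> {U0}" using phi_x0 by auto
  have ne: "\<phi> U0 x0 \<noteq> 0"
  proof
    assume "\<phi> U0 x0 = 0"
    then have "{V\<in>U. \<phi> V x0 \<noteq> 0} = {}" using sub by auto
    then show False using phi_sum[OF x0] by simp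
  qed
  have U0: "U0 \<in> U" using poc by (simp add: pointed_open_cover_def)
  have "{V\<in>U. \<phi> V x0 \<noteq> 0} = {U0}" using sub ne U0 by auto
  then have one: "\<phi> U0 x0 = 1" using phi_sum[OF x0] by simp
  show ?thesis
  proof
    fix V show "canonical_map \<phi> x0 V = nerve_vertex U0 V"
      using one phi_x0[of V] by (cases "V = U0") (auto simp: canonical_map_def nerve_vertex_def)
  qed
qed

lemma p_lcont: "lcont X U (canonical_map \<phi>)"
  unfolding lcont_def
proof (intro conjI ballI allI impI)
  fix x assume x: "x \<in> topspace X"
  then show "canonical_map \<phi> x \<in> nerve_points U" by (rule p_NP)
  fix e :: real assume e: "e > 0"
  obtain W where W: "openin X W" "x \<in> W" "finite {V\<in>U. \<exists>y\<in>W. \<phi> V y \<noteq> 0}"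
    using phi_lf[OF x] by blast
  define F where "F = {V\<in>U. \<exists>y\<in>W. \<phi> V y \<noteq> 0}"
  define g where "g = (\<lambda>y. \<Sum>V\<in>F. \<bar>\<phi> V x - \<phi> V y\<bar>)"
  have gc: "continuous_map X euclideanreal g"
    unfolding g_def
    by (intro continuous_map_sum continuous_map_real_abs continuous_map_diff continuous_map_const[THEN iffD2] phi_cont)
       (use W(3) x in \<open>auto simp: F_def\<close>)
  have "openin X {y \<in> topspace X. g y \<in> {..<e}}"
    by (rule openin_continuous_map_preimage[OF gc]) auto
  then have Q: "openin X (W \<inter> {y \<in> topspace X. g y \<in> {..<e}})" using W(1) by auto
  have gx: "g x = 0" by (simp add: g_def)
  show "\<exists>Q. openin X Q \<and> x \<in> Q \<and> (\<forall>z'\<in>Q. l1_dist (canonical_map \<phi> x) (canonical_map \<phi> z') < e)"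
  proof (intro exI conjI ballI)
    show "openin X (W \<inter> {y \<in> topspace X. g y \<in> {..<e}})" by (rule Q)
    show "x \<in> W \<inter> {y \<in> topspace X. g y \<in> {..<e}}" using W(2) x gx e by simp
    fix y assume y: "y \<in> W \<inter> {y \<in> topspace X. g y \<in> {..<e}}"
    have "l1_dist (canonical_map \<phi> x) (canonical_map \<phi> y) = (\<Sum>V\<in>F. \<bar>canonical_map \<phi> x V - canonical_map \<phi> y V\<bar>)"
      by (rule l1_superset) (use W(2,3) y x in \<open>auto simp: F_def fsupp_p_eq\<close>)
    also have "\<dots> = g y" by (simp add: g_def canonical_map_def)
    finally show "l1_dist (canonical_map \<phi> x) (canonical_map \<phi> y) < e" using y by simp
  qed
qed

lemma p_cm: "continuous_map X (nerve_top U) (canonical_map \<phi>)"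
  by (rule lcont_cm[OF p_lcont])

end

lemma tent_aux:
  fixes x :: real
  assumes "real n \<le> x"
  shows "(\<Sum>i\<le>n. max 0 (1 - \<bar>x - real i\<bar>)) = max 0 (1 - (x - real n))"
  using assms
proof (induction n)
  case 0 then show ?case by simp
next
  case (Suc n)
  have "(\<Sum>i\<le>n. max 0 (1 - \<bar>x - real i\<bar>)) = max 0 (1 - (x - real n))" using Suc by simp
  also have "\<dots> = 0" using Suc.prems by simp
  finally show ?case using Suc.prems by (simp add: sum.atMost_Suc)
qed

lemma tent_sum:
  fixes x :: real
  assumes "0 \<le> x" "x \<le> real n"
  shows "(\<Sum>i\<le>n. max 0 (1 - \<bar>x - real i\<bar>)) = 1"
  using assms
proof (induction n)
  case 0 then show ?case by simp
next
  case (Suc n)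
  show ?case
  proof (cases "x \<le> real n")
    case True
    then have "(\<Sum>i\<le>n. max 0 (1 - \<bar>x - real i\<bar>)) = 1" using Suc by simp
    moreover have "max 0 (1 - \<bar>x - real (Suc n)\<bar>) = 0" using True by simp
    ultimately show ?thesis by (simp add: sum.atMost_Suc)
  next
    case False
    then have "(\<Sum>i\<le>n. max 0 (1 - \<bar>x - real i\<bar>)) = max 0 (1 - (x - real n))"
      by (intro tent_aux) simp
    also have "\<dots> = 1 - (x - real n)" using False Suc.prems by simp
    finally show ?thesis using False Suc.prems by (simp add: sum.atMost_Suc)
  qed
qed

lemma lcont_combo:
  assumes a: "lcont Z U a" and b: "lcont Z U b" and c: "continuous_map Z euclideanreal c"
    and c01: "\<And>z. z \<in> topspace Z \<Longrightarrow> c z \<in> {0..1}"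
    and sub: "\<And>z. z \<in> topspace Z \<Longrightarrow> fsupp (b z) \<subseteq> fsupp (a z)"
  shows "lcont Z U (\<lambda>z. combo (c z) (a z) (b z))"
  unfolding lcont_def
proof (intro conjI ballI allI impI)
  fix z assume z: "z \<in> topspace Z"
  have az: "a z \<in> nerve_points U" and bz: "b z \<in> nerve_points U" using a b z by (auto simp: lcont_def)
  show "combo (c z) (a z) (b z) \<in> nerve_points U" by (rule combo_NP[OF az bz sub[OF z] c01[OF z]])
  fix e :: real assume e: "e > 0"
  obtain Qa where Qa: "openin Z Qa" "z \<in> Qa" "\<forall>z'\<in>Qa. l1_dist (a z) (a z') < e/4"
    using a z e unfolding lcont_def by (meson divide_pos_pos zero_less_numeral)
  obtain Qb where Qb: "openin Z Qb" "z \<in> Qb" "\<forall>z'\<in>Qb. l1_dist (b z) (b z') < e/4"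
    using b z e unfolding lcont_def by (meson divide_pos_pos zero_less_numeral)
  define Qc where "Qc = {z' \<in> topspace Z. c z' \<in> {c z - e/4 <..< c z + e/4}}"
  have Qc: "openin Z Qc" unfolding Qc_def by (rule openin_continuous_map_preimage[OF c]) auto
  show "\<exists>Q. openin Z Q \<and> z \<in> Q \<and> (\<forall>z'\<in>Q. l1_dist (combo (c z) (a z) (b z)) (combo (c z') (a z') (b z')) < e)"
  proof (intro exI conjI ballI)
    show "openin Z (Qa \<inter> Qb \<inter> Qc)" using Qa Qb Qc by auto
    show "z \<in> Qa \<inter> Qb \<inter> Qc" using Qa Qb z e by (auto simp: Qc_def)
    fix z' assume z': "z' \<in> Qa \<inter> Qb \<inter> Qc"
    then have z'Z: "z' \<in> topspace Z" by (auto simp: Qc_def)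
    have az': "a z' \<in> nerve_points U" and bz': "b z' \<in> nerve_points U" using a b z'Z by (auto simp: lcont_def)
    have "l1_dist (combo (c z) (a z) (b z)) (combo (c z') (a z') (b z'))
        \<le> 2 * \<bar>c z - c z'\<bar> + l1_dist (a z) (a z') + l1_dist (b z) (b z')"
      by (rule combo_l1[OF az az' bz bz' c01[OF z] c01[OF z'Z]])
    moreover have "\<bar>c z - c z'\<bar> < e/4"
    proof -
      have "c z - e/4 < c z'" "c z' < c z + e/4" using z' by (auto simp: Qc_def)
      then show ?thesis by (simp only: abs_less_iff) linarith
    qed
    moreover have "l1_dist (a z) (a z') < e/4" "l1_dist (b z) (b z') < e/4" using z' Qa Qb by auto
    ultimately show "l1_dist (combo (c z) (a z) (b z)) (combo (c z') (a z') (b z')) < e"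
      by (simp add: field_simps)
  qed
qed

lemma combo_0 [simp]: "combo 0 a b = a" by (simp add: combo_def)
lemma combo_1 [simp]: "combo 1 a b = b" by (simp add: combo_def)
lemma combo_same [simp]: "combo c a a = a" by (auto simp: combo_def fun_eq_iff algebra_simps)

context
  fixes X :: "'a topology" and x0 :: 'a and U :: "'a set set" and U0 :: "'a set"
    and \<phi> :: "'a set \<Rightarrow> 'a \<Rightarrow> real"
  assumes x0: "x0 \<in> topspace X" and poc: "pointed_open_cover X x0 U U0"
    and pou: "partition_of_unity X U \<phi>"
begin

lemma nerve_local:
  assumes \<alpha>: "\<alpha> \<in> loops X x0"
  shows "\<exists>N. openin (loop_space X x0) N \<and> \<alpha> \<in> N \<and>
    (\<forall>\<beta>\<in>N. loop_homotopic (nerve_top U) (nerve_vertex U0) (canonical_map \<phi> \<circ> \<beta>) (canonical_map \<phi> \<circ> \<alpha>))"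
proof -
  let ?p = "canonical_map \<phi>"
  let ?v0 = "nerve_vertex U0"
  let ?NT = "nerve_top U"
  define Op where "Op V = {x \<in> topspace X. \<phi> V x > 0}" for V
  have Op_open: "openin X (Op V)" if "V \<in> U" for V
    unfolding Op_def
    by (rule openin_continuous_map_preimage[OF phi_cont[OF x0 poc pou that], of "{0<..}", simplified])
  have U0U: "U0 \<in> U" using poc by (simp add: pointed_open_cover_def)
  have cover: "\<exists>V\<in>U. \<alpha> t \<in> Op V" if t: "t \<in> {0..1}" for t
  proof -
    have at: "\<alpha> t \<in> topspace X" by (rule loops_in_topspace[OF \<alpha> t])
    have "(\<Sum>V\<in>{V\<in>U. \<phi> V (\<alpha> t) \<noteq> 0}. \<phi> V (\<alpha> t)) = 1" by (rule phi_sum[OF x0 poc pou at])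
    then have "{V\<in>U. \<phi> V (\<alpha> t) \<noteq> 0} \<noteq> {}"
    proof (intro notI)
      assume "(\<Sum>V\<in>{V\<in>U. \<phi> V (\<alpha> t) \<noteq> 0}. \<phi> V (\<alpha> t)) = 1" "{V\<in>U. \<phi> V (\<alpha> t) \<noteq> 0} = {}"
      then show False by simp
    qed
    then obtain V where "V \<in> {V\<in>U. \<phi> V (\<alpha> t) \<noteq> 0}" by blast
    moreover have "0 \<le> \<phi> V (\<alpha> t)" by (rule phi_nonneg[OF x0 poc pou at])
    ultimately have "0 < \<phi> V (\<alpha> t)" "V \<in> U" by (auto simp: less_le)
    then show ?thesis using at by (auto simp: Op_def)
  qed
  have pre: "openin (top_of_set {0..1}) {t \<in> {0..1}. \<alpha> t \<in> Op V}" if "V \<in> U" for V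
    using openin_continuous_map_preimage[OF loopsD(1)[OF \<alpha>, unfolded pathin_def] Op_open[OF that]] by simp
  have "\<forall>V\<in>U. \<exists>T. open T \<and> {t \<in> {0..1}. \<alpha> t \<in> Op V} = {0..1} \<inter> T"
    using pre openin_open by blast
  from bchoice[OF this] obtain G where G0: "\<forall>V\<in>U. open (G V) \<and> {t \<in> {0..1}. \<alpha> t \<in> Op V} = {0..1} \<inter> G V"
    by blast
  then have G: "\<And>V. V \<in> U \<Longrightarrow> open (G V) \<and> {t \<in> {0..1}. \<alpha> t \<in> Op V} = {0..1} \<inter> G V"
    by blast
  obtain \<delta> where \<delta>: "0 < \<delta>" "\<And>T. \<lbrakk>T \<subseteq> {0..1::real}; diameter T < \<delta>\<rbrakk> \<Longrightarrow> \<exists>B \<in> G ` U. T \<subseteq> B"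
  proof (rule Lebesgue_number_lemma[of "{0..1::real}" "G ` U"])
    show "G ` U \<noteq> {}" using U0U by auto
    show "{0..1} \<subseteq> \<Union> (G ` U)"
    proof
      fix t :: real assume t: "t \<in> {0..1}"
      then obtain V where "V \<in> U" "\<alpha> t \<in> Op V" using cover by blast
      then show "t \<in> \<Union> (G ` U)" using G[of V] t by auto
    qed
  qed (use G in auto)
  obtain n :: nat where n: "2 / \<delta> < real n" using reals_Archimedean2 by blast
  have "2 / \<delta> > 0" using \<delta>(1) by simp
  then have npos: "real n > 0" using n by linarith
  have n\<delta>: "2 / real n < \<delta>" using n npos \<delta>(1) by (simp add: field_simps)
  define K where "K i = {0..1} \<inter> {(real i - 1) / real n .. (real i + 1) / real n}" for i :: nat
  have K01: "K i \<subseteq> {0..1}" for i by (auto simp: K_def)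
  have Kc: "compact (K i)" for i unfolding K_def by (intro compact_Int_closed) auto
  have Kdiam: "diameter (K i) < \<delta>" for i
  proof -
    have "diameter (K i) \<le> diameter {(real i - 1) / real n .. (real i + 1) / real n}"
      by (rule diameter_subset) (auto simp: K_def)
    also have "\<dots> \<le> 2 / real n" using npos by (simp add: field_simps)
    finally show ?thesis using n\<delta> by simp
  qed
  have Kex: "\<exists>V. V \<in> U \<and> (\<forall>t\<in>K i. \<alpha> t \<in> Op V)" for i
  proof -
    obtain V where V: "V \<in> U" "K i \<subseteq> G V" using \<delta>(2)[OF K01 Kdiam] by blast
    have "\<forall>t\<in>K i. \<alpha> t \<in> Op V"
    proof
      fix t assume "t \<in> K i"
      then have "t \<in> {0..1} \<inter> G V" using V K01[of i] by auto
      then show "\<alpha> t \<in> Op V" using G[OF V(1)] by blast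
    qed
    then show ?thesis using V by blast
  qed
  define Vs where "Vs i = (SOME V. V \<in> U \<and> (\<forall>t\<in>K i. \<alpha> t \<in> Op V))" for i
  have Vs: "Vs i \<in> U" "\<And>t. t \<in> K i \<Longrightarrow> \<alpha> t \<in> Op (Vs i)" for i
    using someI_ex[OF Kex[of i]] unfolding Vs_def by blast+
  define \<rho> where "\<rho> i t = max 0 (1 - \<bar>real n * t - real i\<bar>)" for i :: nat and t :: real
  define \<theta> where "\<theta> t = (\<lambda>V. \<Sum>i\<in>{x. x \<in> {..n} \<and> Vs x = V}. \<rho> i t)" for t
  define N where "N = {\<beta> \<in> loops X x0. \<forall>i\<le>n. \<forall>t\<in>K i. \<beta> t \<in> Op (Vs i)}"
  define Sb where "Sb = {{g \<in> loops X x0. g ` K' \<subseteq> W} | K' W. compact K' \<and> K' \<subseteq> {0..1} \<and> openin X W}"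
  define B where "B i = {g \<in> loops X x0. g ` K i \<subseteq> Op (Vs i)}" for i
  have "generate_topology_on Sb (\<Inter> (B ` {..n}))"
  proof (rule generate_topology_on_Inter)
    show "finite (B ` {..n})" by simp
    show "B ` {..n} \<noteq> {}" by simp
    fix K' assume "K' \<in> B ` {..n}"
    then obtain i where "K' = B i" by auto
    moreover have "B i \<in> Sb" unfolding Sb_def B_def using Kc K01 Op_open Vs(1) by blast
    ultimately show "generate_topology_on Sb K'" by (simp add: generate_topology_on.Basis)
  qed
  then have "openin (topology_generated_by Sb) (\<Inter> (B ` {..n}))"
    by (simp add: openin_topology_generated_by_iff)
  moreover have "N = \<Inter> (B ` {..n}) \<inter> loops X x0"
    unfolding N_def B_def by auto
  ultimately have Nopen: "openin (loop_space X x0) N"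
    unfolding loop_space_def Sb_def[symmetric] openin_subtopology by blast
  have \<alpha>N: "\<alpha> \<in> N" unfolding N_def using \<alpha> Vs(2) by auto
  have \<rho>K: "t \<in> K i" if "\<rho> i t \<noteq> 0" "t \<in> {0..1}" for i t
  proof -
    have "\<bar>real n * t - real i\<bar> < 1" using that(1) by (auto simp: \<rho>_def max_def split: if_splits)
    then have "real i - 1 \<le> real n * t" "real n * t \<le> real i + 1" by auto
    then have "(real i - 1) / real n \<le> t" "t \<le> (real i + 1) / real n"
      using npos by (auto simp: field_simps)
    then show ?thesis using that(2) by (simp add: K_def)
  qed
  have \<theta>_supp: "fsupp (\<theta> t) \<subseteq> fsupp (?p (\<beta> t))" if "\<beta> \<in> N" "t \<in> {0..1}" for \<beta> t
  proof
    fix V assume "V \<in> fsupp (\<theta> t)"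
    then have "(\<Sum>i\<in>{x. x \<in> {..n} \<and> Vs x = V}. \<rho> i t) \<noteq> 0" by (simp add: fsupp_def \<theta>_def)
    then obtain i where i: "i \<in> {x. x \<in> {..n} \<and> Vs x = V}" "\<rho> i t \<noteq> 0"
      by (rule sum.not_neutral_contains_not_neutral)
    then have "\<beta> t \<in> Op (Vs i)" using that \<rho>K[OF i(2) that(2)] by (auto simp: N_def)
    then show "V \<in> fsupp (?p (\<beta> t))" using i by (auto simp: Op_def fsupp_def canonical_map_def)
  qed
  have \<theta>_img: "fsupp (\<theta> t) \<subseteq> Vs ` {..n}" for t
  proof
    fix V assume "V \<in> fsupp (\<theta> t)"
    then have "(\<Sum>i\<in>{x. x \<in> {..n} \<and> Vs x = V}. \<rho> i t) \<noteq> 0" by (simp add: fsupp_def \<theta>_def)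
    then obtain i where i: "i \<in> {x. x \<in> {..n} \<and> Vs x = V}"
      by (rule sum.not_neutral_contains_not_neutral)
    then show "V \<in> Vs ` {..n}" by auto
  qed
  have \<theta>_sum: "(\<Sum>V\<in>Vs ` {..n}. g V) = (\<Sum>i\<le>n. h i)"
    if "\<And>V. g V = (\<Sum>i\<in>{x. x \<in> {..n} \<and> Vs x = V}. h i)" for g h
    using sum.image_gen[of "{..n}" h Vs] that by simp
  have \<theta>_NP: "\<theta> t \<in> nerve_points U" if t: "t \<in> {0..1}" for t
  proof -
    have nn: "\<forall>V. 0 \<le> \<theta> t V" by (auto simp: \<theta>_def \<rho>_def intro: sum_nonneg)
    have fin: "finite (fsupp (\<theta> t))" using \<theta>_img finite_subset by blast
    have sU: "fsupp (\<theta> t) \<subseteq> U" using \<theta>_img Vs(1) by blast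
    have at: "\<alpha> t \<in> topspace X" by (rule loops_in_topspace[OF \<alpha> t])
    have "\<alpha> t \<in> \<Inter>(fsupp (\<theta> t))" using \<theta>_supp[OF \<alpha>N t] p_mem[OF x0 poc pou at] by blast
    then have ne: "\<Inter>(fsupp (\<theta> t)) \<noteq> {}" by auto
    have "(\<Sum>V\<in>fsupp (\<theta> t). \<theta> t V) = (\<Sum>V\<in>Vs ` {..n}. \<theta> t V)"
      by (rule sum.mono_neutral_left[OF _ \<theta>_img]) (auto simp: fsupp_def)
    also have "\<dots> = (\<Sum>i\<le>n. \<rho> i t)" by (rule \<theta>_sum) (simp add: \<theta>_def)
    also have "\<dots> = 1"
    proof -
      have "(\<Sum>i\<le>n. \<rho> i t) = (\<Sum>i\<le>n. max 0 (1 - \<bar>real n * t - real i\<bar>))" by (simp add: \<rho>_def)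
      also have "\<dots> = 1" using t npos by (intro tent_sum) (auto simp: mult_left_le)
      finally show ?thesis .
    qed
    finally show ?thesis using nn fin sU ne unfolding nerve_points_def by blast
  qed
  have \<rho>c: "continuous_on S (\<rho> i)" for i S unfolding \<rho>_def by (intro continuous_intros)
  have \<theta>_lcont: "lcont (top_of_set {0..1}) U \<theta>"
    unfolding lcont_def
  proof (intro conjI ballI allI impI)
    fix t assume t: "t \<in> topspace (top_of_set {0..1::real})"
    then show "\<theta> t \<in> nerve_points U" using \<theta>_NP by simp
    fix e :: real assume e: "e > 0"
    define g where "g s = (\<Sum>i\<le>n. \<bar>\<rho> i t - \<rho> i s\<bar>)" for s
    have gc: "continuous_map (top_of_set {0..1}) euclideanreal g"
      unfolding g_def continuous_map_iff_continuous by (intro continuous_intros \<rho>c)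
    have Q: "openin (top_of_set {0..1}) {s \<in> topspace (top_of_set {0..1}). g s \<in> {..<e}}"
      by (rule openin_continuous_map_preimage[OF gc]) auto
    show "\<exists>Q. openin (top_of_set {0..1}) Q \<and> t \<in> Q \<and> (\<forall>z'\<in>Q. l1_dist (\<theta> t) (\<theta> z') < e)"
    proof (intro exI conjI ballI)
      show "openin (top_of_set {0..1}) {s \<in> topspace (top_of_set {0..1}). g s \<in> {..<e}}" by (rule Q)
      show "t \<in> {s \<in> topspace (top_of_set {0..1}). g s \<in> {..<e}}" using t e by (simp add: g_def)
      fix s assume s: "s \<in> {s \<in> topspace (top_of_set {0..1::real}). g s \<in> {..<e}}"
      have "l1_dist (\<theta> t) (\<theta> s) = (\<Sum>V\<in>Vs ` {..n}. \<bar>\<theta> t V - \<theta> s V\<bar>)"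
        by (rule l1_superset) (use \<theta>_img in auto)
      also have "\<dots> \<le> (\<Sum>V\<in>Vs ` {..n}. (\<Sum>i\<in>{x. x \<in> {..n} \<and> Vs x = V}. \<bar>\<rho> i t - \<rho> i s\<bar>))"
      proof (rule sum_mono)
        fix V
        have "\<bar>\<theta> t V - \<theta> s V\<bar> = \<bar>\<Sum>i\<in>{x. x \<in> {..n} \<and> Vs x = V}. \<rho> i t - \<rho> i s\<bar>"
          by (simp add: \<theta>_def sum_subtractf)
        also have "\<dots> \<le> (\<Sum>i\<in>{x. x \<in> {..n} \<and> Vs x = V}. \<bar>\<rho> i t - \<rho> i s\<bar>)" by (rule sum_abs)
        finally show "\<bar>\<theta> t V - \<theta> s V\<bar> \<le> (\<Sum>i\<in>{x. x \<in> {..n} \<and> Vs x = V}. \<bar>\<rho> i t - \<rho> i s\<bar>)" .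
      qed
      also have "\<dots> = g s" unfolding g_def by (rule \<theta>_sum) simp
      finally show "l1_dist (\<theta> t) (\<theta> s) < e" using s by simp
    qed
  qed
  have \<theta>0: "\<theta> 0 = ?v0"
  proof -
    have "0 \<in> K 0" using npos by (simp add: K_def)
    then have "\<alpha> 0 \<in> Op (Vs 0)" by (rule Vs(2))
    then have "\<phi> (Vs 0) x0 \<noteq> 0" using loopsD(2)[OF \<alpha>] by (simp add: Op_def)
    then have V0: "Vs 0 = U0" by (rule phi_x0[OF x0 poc pou])
    have r: "\<rho> i 0 = (if i = 0 then 1 else 0)" for i by (simp add: \<rho>_def)
    show ?thesis
    proof
      fix V
      have "\<theta> 0 V = (\<Sum>i\<in>{x. x \<in> {..n} \<and> Vs x = V}. if i = 0 then 1 else 0)" by (simp add: \<theta>_def r)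
      also have "\<dots> = (if 0 \<in> {x. x \<in> {..n} \<and> Vs x = V} then 1 else 0)" by (rule sum.delta) simp
      finally show "\<theta> 0 V = ?v0 V" using V0 by (auto simp: nerve_vertex_def)
    qed
  qed
  have \<theta>1: "\<theta> 1 = ?v0"
  proof -
    have "1 \<in> K n" using npos by (simp add: K_def)
    then have "\<alpha> 1 \<in> Op (Vs n)" by (rule Vs(2))
    then have "\<phi> (Vs n) x0 \<noteq> 0" using loopsD(3)[OF \<alpha>] by (simp add: Op_def)
    then have V1: "Vs n = U0" by (rule phi_x0[OF x0 poc pou])
    have r: "\<rho> i 1 = (if i = n then 1 else 0)" if "i \<le> n" for i
    proof (cases "i = n")
      case False
      then have "real i + 1 \<le> real n" using that by linarith
      then show ?thesis using False by (simp add: \<rho>_def)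
    qed (simp add: \<rho>_def)
    show ?thesis
    proof
      fix V
      have "\<theta> 1 V = (\<Sum>i\<in>{x. x \<in> {..n} \<and> Vs x = V}. if i = n then 1 else 0)"
        unfolding \<theta>_def by (rule sum.cong) (auto simp: r)
      also have "\<dots> = (if n \<in> {x. x \<in> {..n} \<and> Vs x = V} then 1 else 0)" by (rule sum.delta) simp
      finally show "\<theta> 1 V = ?v0 V" using V1 by (auto simp: nerve_vertex_def)
    qed
  qed
  define \<theta>' where "\<theta>' t = (if t \<in> {0..1} then \<theta> t else ?v0)" for t
  have \<theta>'L: "\<theta>' \<in> loops ?NT ?v0"
  proof -
    have "continuous_map (top_of_set {0..1}) ?NT \<theta>" by (rule lcont_cm[OF \<theta>_lcont])
    then have "pathin ?NT \<theta>'" unfolding pathin_def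
      by (rule continuous_map_eq) (simp add: \<theta>'_def)
    then show ?thesis using \<theta>0 \<theta>1 by (simp add: loops_def \<theta>'_def)
  qed
  have hom: "loop_homotopic ?NT ?v0 (?p \<circ> \<beta>) \<theta>'" if \<beta>: "\<beta> \<in> N" for \<beta>
  proof -
    have \<beta>L: "\<beta> \<in> loops X x0" using \<beta> by (simp add: N_def)
    have pL: "?p \<circ> \<beta> \<in> loops ?NT ?v0"
      by (rule comp_loops[OF p_cm[OF x0 poc pou] p_x0[OF x0 poc pou] \<beta>L])
    let ?D = "{0..1::real} \<times> {0..1::real}"
    have sndc: "continuous_map (top_of_set ?D) (top_of_set {0..1}) snd"
      by (auto intro: continuous_intros)
    have la: "lcont (top_of_set ?D) U (\<lambda>z. ?p (\<beta> (snd z)))"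
      by (rule lcont_compose[OF lcont_compose[OF p_lcont[OF x0 poc pou] loopsD(1)[OF \<beta>L, unfolded pathin_def]] sndc])
    have lb: "lcont (top_of_set ?D) U (\<lambda>z. \<theta> (snd z))"
      by (rule lcont_compose[OF \<theta>_lcont sndc])
    have lh: "lcont (top_of_set ?D) U (\<lambda>z. combo (fst z) (?p (\<beta> (snd z))) (\<theta> (snd z)))"
    proof (rule lcont_combo[OF la lb])
      show "continuous_map (top_of_set ?D) euclideanreal fst" by (auto intro: continuous_intros)
      show "fst z \<in> {0..1}" if "z \<in> topspace (top_of_set ?D)" for z using that by auto
      show "fsupp (\<theta> (snd z)) \<subseteq> fsupp (?p (\<beta> (snd z)))" if "z \<in> topspace (top_of_set ?D)" for z
        by (rule \<theta>_supp[OF \<beta>]) (use that in auto)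
    qed
    show ?thesis
    proof (rule lhom_intro[OF pL \<theta>'L lcont_cm[OF lh]])
      show "combo (fst (0, t)) (?p (\<beta> (snd (0, t)))) (\<theta> (snd (0, t))) = (?p \<circ> \<beta>) t" for t by simp
      show "combo (fst (1, t)) (?p (\<beta> (snd (1, t)))) (\<theta> (snd (1, t))) = \<theta>' t" if "t \<in> {0..1}" for t
        using that by (simp add: \<theta>'_def)
      show "combo (fst (s, 0)) (?p (\<beta> (snd (s, 0)))) (\<theta> (snd (s, 0))) = ?v0 \<and>
            combo (fst (s, 1)) (?p (\<beta> (snd (s, 1)))) (\<theta> (snd (s, 1))) = ?v0" for s
        using loopsD(2,3)[OF \<beta>L] \<theta>0 \<theta>1 p_x0[OF x0 poc pou] by simp
    qed
  qed
  show ?thesis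
  proof (intro exI conjI ballI)
    show "openin (loop_space X x0) N" by (rule Nopen)
    show "\<alpha> \<in> N" by (rule \<alpha>N)
    fix \<beta> assume "\<beta> \<in> N"
    show "loop_homotopic ?NT ?v0 (?p \<circ> \<beta>) (?p \<circ> \<alpha>)"
      by (rule lh_trans[OF hom[OF \<open>\<beta> \<in> N\<close>] lh_sym[OF hom[OF \<alpha>N]]])
  qed
qed

end

lemma openin_quotient_top:
  "openin (quotient_top T q S) V \<longleftrightarrow> V \<subseteq> S \<and> openin T {x \<in> topspace T. q x \<in> V}"
proof -
  have "istopology (\<lambda>V. V \<subseteq> S \<and> openin T {x \<in> topspace T. q x \<in> V})"
    unfolding istopology_def
  proof (rule conjI; intro allI impI)
    fix A B assume A: "A \<subseteq> S \<and> openin T {x \<in> topspace T. q x \<in> A}"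
      and B: "B \<subseteq> S \<and> openin T {x \<in> topspace T. q x \<in> B}"
    have eq: "{x \<in> topspace T. q x \<in> A \<inter> B} = {x \<in> topspace T. q x \<in> A} \<inter> {x \<in> topspace T. q x \<in> B}" by auto
    have o: "openin T ({x \<in> topspace T. q x \<in> A} \<inter> {x \<in> topspace T. q x \<in> B})"
      using openin_Int[of T "{x \<in> topspace T. q x \<in> A}" "{x \<in> topspace T. q x \<in> B}"] A B by blast
    show "A \<inter> B \<subseteq> S \<and> openin T {x \<in> topspace T. q x \<in> A \<inter> B}"
    proof
      show "A \<inter> B \<subseteq> S" using A by blast
      show "openin T {x \<in> topspace T. q x \<in> A \<inter> B}" unfolding eq by (rule o)
    qed
  next
    fix K assume K: "\<forall>A\<in>K. A \<subseteq> S \<and> openin T {x \<in> topspace T. q x \<in> A}"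
    have "{x \<in> topspace T. q x \<in> \<Union>K} = \<Union>((\<lambda>A. {x \<in> topspace T. q x \<in> A}) ` K)" by auto
    moreover have "openin T (\<Union>((\<lambda>A. {x \<in> topspace T. q x \<in> A}) ` K))"
      by (intro openin_Union) (use K in blast)
    moreover have "\<Union>K \<subseteq> S" using K by blast
    ultimately show "\<Union>K \<subseteq> S \<and> openin T {x \<in> topspace T. q x \<in> \<Union>K}" by simp
  qed
  then show ?thesis unfolding quotient_top_def by simp
qed

lemma topspace_quotient_top:
  assumes "\<And>x. x \<in> topspace T \<Longrightarrow> q x \<in> S"
  shows "topspace (quotient_top T q S) = S"
proof
  have "V \<subseteq> S" if "openin (quotient_top T q S) V" for V using that unfolding openin_quotient_top by simp
  then show "topspace (quotient_top T q S) \<subseteq> S" by (auto simp: topspace_def)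
  have "{x \<in> topspace T. q x \<in> S} = topspace T" using assms by auto
  then have "openin (quotient_top T q S) S" unfolding openin_quotient_top by simp
  then show "S \<subseteq> topspace (quotient_top T q S)" by (rule openin_subset)
qed

definition pb :: "'w set \<Rightarrow> ('w \<Rightarrow> 'c) \<Rightarrow> 'w topology" where
  "pb C f = topology (\<lambda>Q. \<exists>S. Q = {w \<in> C. f w \<in> S})"

lemma openin_pb: "openin (pb C f) Q \<longleftrightarrow> (\<exists>S. Q = {w \<in> C. f w \<in> S})"
proof -
  have "istopology (\<lambda>Q. \<exists>S. Q = {w \<in> C. f w \<in> S})"
    unfolding istopology_def
  proof (rule conjI; intro allI impI)
    fix A B assume "\<exists>S. A = {w \<in> C. f w \<in> S}" "\<exists>S. B = {w \<in> C. f w \<in> S}"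
    then obtain SA SB where "A = {w \<in> C. f w \<in> SA}" "B = {w \<in> C. f w \<in> SB}" by blast
    then have "A \<inter> B = {w \<in> C. f w \<in> SA \<inter> SB}" by auto
    then show "\<exists>S. A \<inter> B = {w \<in> C. f w \<in> S}" by blast
  next
    fix K assume K: "\<forall>A\<in>K. \<exists>S. A = {w \<in> C. f w \<in> S}"
    have "\<Union>K = {w \<in> C. f w \<in> f ` \<Union>K}"
    proof
      show "\<Union>K \<subseteq> {w \<in> C. f w \<in> f ` \<Union>K}" using K by blast
      show "{w \<in> C. f w \<in> f ` \<Union>K} \<subseteq> \<Union>K"
      proof
        fix w assume "w \<in> {w \<in> C. f w \<in> f ` \<Union>K}"
        then obtain w' A where w': "w \<in> C" "w' \<in> A" "A \<in> K" "f w = f w'" by auto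
        then obtain S where S: "A = {w \<in> C. f w \<in> S}" using K by blast
        have "f w' \<in> S" using w'(2) S by simp
        then have "w \<in> A" using w'(1,4) S by simp
        then show "w \<in> \<Union>K" using w'(3) by blast
      qed
    qed
    then show "\<exists>S. \<Union>K = {w \<in> C. f w \<in> S}" by blast
  qed
  then show ?thesis unfolding pb_def by simp
qed

lemma topspace_pb: "topspace (pb C f) = C"
proof
  have "Q \<subseteq> C" if "openin (pb C f) Q" for Q using that unfolding openin_pb by blast
  then show "topspace (pb C f) \<subseteq> C" by (auto simp: topspace_def)
  have "openin (pb C f) C" unfolding openin_pb by (rule exI[of _ UNIV]) simp
  then show "C \<subseteq> topspace (pb C f)" by (rule openin_subset)
qed

lemma pb_level_open: "openin (pb C f) {w \<in> C. f w = c}"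
  unfolding openin_pb by (rule exI[of _ "{c}"]) simp

lemma topspace_qtop: "topspace (pi1_qtop X x0) = pi1_carrier X x0"
  unfolding pi1_qtop_def
proof (rule topspace_quotient_top)
  fix x assume "x \<in> topspace (loop_space X x0)"
  then have "x \<in> loops X x0" by (simp add: loop_space_def)
  then show "loop_class X x0 x \<in> pi1_carrier X x0" by (simp add: pi1_carrier_def)
qed

lemma openin_qtop:
  "openin (pi1_qtop X x0) V \<longleftrightarrow> V \<subseteq> pi1_carrier X x0 \<and>
     openin (loop_space X x0) {x \<in> topspace (loop_space X x0). loop_class X x0 x \<in> V}"
  unfolding pi1_qtop_def by (rule openin_quotient_top)

context
  fixes X :: "'a topology" and x0 :: 'a and U :: "'a set set" and U0 :: "'a set"
    and \<phi> :: "'a set \<Rightarrow> 'a \<Rightarrow> real"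
  assumes x0: "x0 \<in> topspace X" and poc: "pointed_open_cover X x0 U U0"
    and pou: "partition_of_unity X U \<phi>"
begin

abbreviation "pp \<equiv> canonical_map \<phi>"
abbreviation "NT \<equiv> nerve_top U"
abbreviation "v0 \<equiv> nerve_vertex U0"

definition psi :: "((real \<Rightarrow> 'a) set \<times> bool) list \<Rightarrow> (real \<Rightarrow> 'a set \<Rightarrow> real) set" where
  "psi w = loop_class NT v0 (pp \<circ> wloop x0 w)"

lemma pcm: "continuous_map X NT pp" by (rule p_cm[OF x0 poc pou])
lemma px0: "pp x0 = v0" by (rule p_x0[OF x0 poc pou])

lemma comp_lhX: "loop_homotopic X x0 f g \<Longrightarrow> loop_homotopic NT v0 (pp \<circ> f) (pp \<circ> g)"
  by (rule comp_lh[OF pcm px0])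

lemma comp_loopsX: "f \<in> loops X x0 \<Longrightarrow> pp \<circ> f \<in> loops NT v0"
  by (rule comp_loops[OF pcm px0])

lemma psi_mult:
  assumes "fst ` set v \<subseteq> pi1_carrier X x0" "fst ` set w \<subseteq> pi1_carrier X x0"
  shows "psi (free_mult v w) = loop_class NT v0 (loop_concat (SOME f. f \<in> psi v) (SOME g. g \<in> psi w))"
proof -
  have svw: "fst ` set (v @ w) \<subseteq> pi1_carrier X x0" using assms by auto
  have lv: "pp \<circ> wloop x0 v \<in> loops NT v0" by (rule comp_loopsX[OF wloop_loops[OF x0 assms(1)]])
  have lw: "pp \<circ> wloop x0 w \<in> loops NT v0" by (rule comp_loopsX[OF wloop_loops[OF x0 assms(2)]])
  have 1: "loop_homotopic X x0 (wloop x0 (free_reduce (v @ w))) (loop_concat (wloop x0 v) (wloop x0 w))"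
    by (rule lh_trans[OF reduce_lh[OF x0 svw] append_lh[OF x0 assms]])
  have 2: "loop_homotopic NT v0 (pp \<circ> wloop x0 (free_reduce (v @ w))) (loop_concat (pp \<circ> wloop x0 v) (pp \<circ> wloop x0 w))"
    using comp_lhX[OF 1] by (simp add: comp_concat)
  have 3: "loop_homotopic NT v0 (loop_concat (pp \<circ> wloop x0 v) (pp \<circ> wloop x0 w)) (loop_concat (SOME f. f \<in> psi v) (SOME g. g \<in> psi w))"
    unfolding psi_def by (rule lh_concat_cong[OF lh_sym[OF some_class[OF lv]] lh_sym[OF some_class[OF lw]]])
  show ?thesis unfolding free_mult_def using class_eq[OF lh_trans[OF 2 3]] by (simp add: psi_def)
qed

lemma psi_inv:
  assumes "fst ` set v \<subseteq> pi1_carrier X x0"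
  shows "psi (free_inv v) = loop_class NT v0 (loop_reverse (SOME f. f \<in> psi v))"
proof -
  have lv: "pp \<circ> wloop x0 v \<in> loops NT v0" by (rule comp_loopsX[OF wloop_loops[OF x0 assms(1)]])
  have 2: "loop_homotopic NT v0 (pp \<circ> wloop x0 (free_inv v)) (loop_reverse (pp \<circ> wloop x0 v))"
    using comp_lhX[OF inv_lh[OF x0 assms]] by (simp add: comp_rev)
  have 3: "loop_homotopic NT v0 (loop_reverse (pp \<circ> wloop x0 v)) (loop_reverse (SOME f. f \<in> psi v))"
    unfolding psi_def by (rule lh_rev_cong[OF lh_sym[OF some_class[OF lv]]])
  show ?thesis using class_eq[OF lh_trans[OF 2 3]] by (simp add: psi_def)
qed

lemma psi_gen:
  assumes \<beta>: "\<beta> \<in> loops X x0"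
  shows "psi (free_gen (loop_class X x0 \<beta>)) = loop_class NT v0 (pp \<circ> \<beta>)"
proof -
  let ?C = "loop_class X x0 \<beta>"
  have C: "?C \<in> pi1_carrier X x0" using \<beta> by (simp add: pi1_carrier_def)
  have r: "lrep ?C \<in> loops X x0" "?C = loop_class X x0 (lrep ?C)" using carrier_rep[OF C] by auto
  have rb: "loop_homotopic X x0 \<beta> (lrep ?C)" by (rule class_eqD[OF \<beta> r(2)])
  have "wloop x0 (free_gen ?C) = loop_concat (lrep ?C) (\<lambda>t. x0)"
    by (simp add: free_gen_def letter_loop_def)
  then have "loop_homotopic X x0 (wloop x0 (free_gen ?C)) \<beta>"
    using lh_trans[OF concat_const_right[OF r(1)] lh_sym[OF rb]] by simp
  then show ?thesis unfolding psi_def by (rule class_eq[OF comp_lhX])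
qed

abbreviation "FC \<equiv> free_group_carrier (pi1_carrier X x0)"
abbreviation "TT \<equiv> pb FC psi"

lemma FC_letters: "w \<in> FC \<Longrightarrow> fst ` set w \<subseteq> pi1_carrier X x0"
  by (simp add: free_group_carrier_def)

lemma TT_group: "group_topology TT FC free_mult free_inv"
  unfolding group_topology_def
proof (intro conjI)
  show "topspace TT = FC" by (rule topspace_pb)
  show "continuous_map (prod_topology TT TT) TT (\<lambda>(a, b). free_mult a b)"
    unfolding continuous_map_def
  proof (intro conjI allI impI)
    show "(\<lambda>(a, b). free_mult a b) \<in> topspace (prod_topology TT TT) \<rightarrow> topspace TT"
      by (auto simp: topspace_pb intro: mult_carrier)
    fix Q assume "openin TT Q"
    then obtain S where S: "Q = {w \<in> FC. psi w \<in> S}" unfolding openin_pb by blast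
    show "openin (prod_topology TT TT) {x \<in> topspace (prod_topology TT TT). (case x of (a, b) \<Rightarrow> free_mult a b) \<in> Q}"
      unfolding openin_prod_topology_alt
    proof (intro allI impI)
      fix x y assume xy: "(x, y) \<in> {x \<in> topspace (prod_topology TT TT). (case x of (a, b) \<Rightarrow> free_mult a b) \<in> Q}"
      then have x: "x \<in> FC" and y: "y \<in> FC" and m: "psi (free_mult x y) \<in> S"
        by (auto simp: topspace_pb S)
      show "\<exists>A B. openin TT A \<and> openin TT B \<and> x \<in> A \<and> y \<in> B \<and>
          A \<times> B \<subseteq> {x \<in> topspace (prod_topology TT TT). (case x of (a, b) \<Rightarrow> free_mult a b) \<in> Q}"
      proof (intro exI conjI)
        show "openin TT {w \<in> FC. psi w = psi x}" by (rule pb_level_open)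
        show "openin TT {w \<in> FC. psi w = psi y}" by (rule pb_level_open)
        show "x \<in> {w \<in> FC. psi w = psi x}" "y \<in> {w \<in> FC. psi w = psi y}" using x y by auto
        show "{w \<in> FC. psi w = psi x} \<times> {w \<in> FC. psi w = psi y}
            \<subseteq> {x \<in> topspace (prod_topology TT TT). (case x of (a, b) \<Rightarrow> free_mult a b) \<in> Q}"
        proof
          fix z assume "z \<in> {w \<in> FC. psi w = psi x} \<times> {w \<in> FC. psi w = psi y}"
          then obtain a b where z: "z = (a, b)" and a: "a \<in> FC" "psi a = psi x" and b: "b \<in> FC" "psi b = psi y"
            by blast
          have "psi (free_mult a b) = psi (free_mult x y)"
            using psi_mult[OF FC_letters[OF a(1)] FC_letters[OF b(1)]] psi_mult[OF FC_letters[OF x] FC_letters[OF y]] a b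
            by simp
          then show "z \<in> {x \<in> topspace (prod_topology TT TT). (case x of (a, b) \<Rightarrow> free_mult a b) \<in> Q}"
            using a b m mult_carrier[OF a(1) b(1)] z by (simp add: topspace_pb S)
        qed
      qed
    qed
  qed
  show "continuous_map TT TT free_inv"
    unfolding continuous_map_def
  proof (intro conjI allI impI)
    show "free_inv \<in> topspace TT \<rightarrow> topspace TT" by (auto simp: topspace_pb intro: inv_carrier)
    fix Q assume "openin TT Q"
    then obtain S where S: "Q = {w \<in> FC. psi w \<in> S}" unfolding openin_pb by blast
    have "{x \<in> topspace TT. free_inv x \<in> Q} = {w \<in> FC. psi w \<in> {A. loop_class NT v0 (loop_reverse (SOME f. f \<in> A)) \<in> S}}"
      using psi_inv FC_letters inv_carrier by (auto simp: topspace_pb S)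
    then show "openin TT {x \<in> topspace TT. free_inv x \<in> Q}" unfolding openin_pb by blast
  qed
qed

lemma TT_gen: "continuous_map (pi1_qtop X x0) TT free_gen"
  unfolding continuous_map_def
proof (intro conjI allI impI)
  show "free_gen \<in> topspace (pi1_qtop X x0) \<rightarrow> topspace TT"
    by (auto simp: topspace_qtop topspace_pb intro: gen_carrier)
  fix Q assume "openin TT Q"
  then obtain S where S: "Q = {w \<in> FC. psi w \<in> S}" unfolding openin_pb by blast
  let ?V = "{x \<in> topspace (pi1_qtop X x0). free_gen x \<in> Q}"
  show "openin (pi1_qtop X x0) ?V"
    unfolding openin_qtop
  proof (intro conjI)
    show "?V \<subseteq> pi1_carrier X x0" by (auto simp: topspace_qtop)
    let ?L = "{x \<in> topspace (loop_space X x0). loop_class X x0 x \<in> ?V}"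
    have L: "?L = {\<beta> \<in> topspace (loop_space X x0). loop_class NT v0 (pp \<circ> \<beta>) \<in> S}"
    proof -
      have "loop_class X x0 \<beta> \<in> ?V \<longleftrightarrow> loop_class NT v0 (pp \<circ> \<beta>) \<in> S" if "\<beta> \<in> loops X x0" for \<beta>
        using that psi_gen[OF that] gen_carrier[of "loop_class X x0 \<beta>" "pi1_carrier X x0"]
        by (simp add: topspace_qtop S pi1_carrier_def)
      moreover have "topspace (loop_space X x0) \<subseteq> loops X x0" by (simp add: loop_space_def)
      ultimately show ?thesis by blast
    qed
    show "openin (loop_space X x0) ?L"
      unfolding L
    proof (subst openin_subopen, intro ballI)
      fix \<beta> assume \<beta>: "\<beta> \<in> {\<beta> \<in> topspace (loop_space X x0). loop_class NT v0 (pp \<circ> \<beta>) \<in> S}"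
      then have \<beta>L: "\<beta> \<in> loops X x0" by (simp add: loop_space_def)
      obtain N where N: "openin (loop_space X x0) N" "\<beta> \<in> N"
        "\<forall>\<gamma>\<in>N. loop_homotopic NT v0 (pp \<circ> \<gamma>) (pp \<circ> \<beta>)"
        using nerve_local[OF x0 poc pou \<beta>L] by blast
      have "N \<subseteq> {\<beta> \<in> topspace (loop_space X x0). loop_class NT v0 (pp \<circ> \<beta>) \<in> S}"
      proof
        fix \<gamma> assume g: "\<gamma> \<in> N"
        then have "\<gamma> \<in> topspace (loop_space X x0)" using openin_subset[OF N(1)] by auto
        moreover have "loop_class NT v0 (pp \<circ> \<gamma>) = loop_class NT v0 (pp \<circ> \<beta>)" by (rule class_eq[OF N(3)[rule_format, OF g]])
        ultimately show "\<gamma> \<in> {\<beta> \<in> topspace (loop_space X x0). loop_class NT v0 (pp \<circ> \<beta>) \<in> S}" using \<beta> by simp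
      qed
      then show "\<exists>T. openin (loop_space X x0) T \<and> \<beta> \<in> T \<and> T \<subseteq> {\<beta> \<in> topspace (loop_space X x0). loop_class NT v0 (pp \<circ> \<beta>) \<in> S}"
        using N by blast
    qed
  qed
qed

lemma TT_markov:
  assumes "openin TT Q"
  shows "openin (markov_top (pi1_qtop X x0)) Q"
proof -
  let ?F = "\<Union> {{U. openin T U} | T. group_topology T (free_group_carrier (topspace (pi1_qtop X x0))) free_mult free_inv
                                  \<and> continuous_map (pi1_qtop X x0) T free_gen}"
  have "Q \<in> ?F" using assms TT_group TT_gen by (auto simp: topspace_qtop)
  then have "openin (topology_generated_by ?F) Q" by (rule topology_generated_by_Basis)
  moreover have "Q \<subseteq> FC" using openin_subset[OF assms] by (simp add: topspace_pb)
  ultimately show ?thesis unfolding markov_top_def topspace_qtop openin_subtopology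
    by (intro exI[of _ Q]) auto
qed

lemma topspace_markov: "topspace (markov_top (pi1_qtop X x0)) = FC"
proof -
  have "openin (markov_top (pi1_qtop X x0)) FC"
    by (rule TT_markov) (use openin_topspace[of TT] in \<open>simp add: topspace_pb\<close>)
  then have "FC \<subseteq> topspace (markov_top (pi1_qtop X x0))" by (rule openin_subset)
  moreover have "topspace (markov_top (pi1_qtop X x0)) \<subseteq> FC"
    unfolding markov_top_def topspace_qtop by simp
  ultimately show ?thesis by blast
qed

lemma tau_level_open:
  "openin (pi1_tau X x0) {C \<in> pi1_carrier X x0. loop_class NT v0 (pp \<circ> lrep C) = c}"
  unfolding pi1_tau_def tau_top_def openin_quotient_top
proof (intro conjI)
  let ?m = "word_product (pi1_mult X x0) (pi1_inv X x0) (pi1_one X x0)"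
  show "{C \<in> pi1_carrier X x0. loop_class NT v0 (pp \<circ> lrep C) = c} \<subseteq> topspace (pi1_qtop X x0)"
    by (auto simp: topspace_qtop)
  have "{w \<in> topspace (markov_top (pi1_qtop X x0)). ?m w \<in> {C \<in> pi1_carrier X x0. loop_class NT v0 (pp \<circ> lrep C) = c}}
      = {w \<in> FC. psi w = c}"
  proof -
    have "?m w \<in> {C \<in> pi1_carrier X x0. loop_class NT v0 (pp \<circ> lrep C) = c} \<longleftrightarrow> psi w = c" if w: "w \<in> FC" for w
    proof -
      have sw: "fst ` set w \<subseteq> pi1_carrier X x0" by (rule FC_letters[OF w])
      have wl: "wloop x0 w \<in> loops X x0" by (rule wloop_loops[OF x0 sw])
      have mw: "?m w = loop_class X x0 (wloop x0 w)" by (rule wp_class[OF x0 sw])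
      have mC: "?m w \<in> pi1_carrier X x0" using mw wl by (simp add: pi1_carrier_def)
      have "loop_homotopic X x0 (wloop x0 w) (lrep (?m w))"
        by (rule class_eqD[OF wl]) (rule trans[OF mw[symmetric] carrier_rep(2)[OF mC]])
      then have "loop_class NT v0 (pp \<circ> wloop x0 w) = loop_class NT v0 (pp \<circ> lrep (?m w))"
        by (rule class_eq[OF comp_lhX])
      then have "loop_class NT v0 (pp \<circ> lrep (?m w)) = psi w"
        unfolding psi_def by simp
      then show ?thesis using mC by auto
    qed
    then show ?thesis by (auto simp: topspace_markov)
  qed
  moreover have "openin (markov_top (pi1_qtop X x0)) {w \<in> FC. psi w = c}"
    by (rule TT_markov[OF pb_level_open])
  ultimately show "openin (markov_top (pi1_qtop X x0))
     {w \<in> topspace (markov_top (pi1_qtop X x0)). ?m w \<in> {C \<in> pi1_carrier X x0. loop_class NT v0 (pp \<circ> lrep C) = c}}"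
    by simp
qed

end

theorem proposition3p24:
  fixes X :: "'a topology" and x0 :: 'a
  assumes "x0 \<in> topspace X"
    and "pi1_injective X x0"
  shows "Hausdorff_space (pi1_tau X x0)"
  unfolding Hausdorff_space_def
proof (intro allI impI)
  fix A B assume AB: "A \<in> topspace (pi1_tau X x0) \<and> B \<in> topspace (pi1_tau X x0) \<and> A \<noteq> B"
  have "V \<subseteq> pi1_carrier X x0" if "openin (pi1_tau X x0) V" for V
    using that unfolding pi1_tau_def tau_top_def openin_quotient_top topspace_qtop by simp
  then have tsub: "topspace (pi1_tau X x0) \<subseteq> pi1_carrier X x0"
    unfolding topspace_def by blast
  have A: "A \<in> pi1_carrier X x0" and B: "B \<in> pi1_carrier X x0" using AB tsub by auto
  let ?\<alpha> = "lrep A" and ?\<beta> = "lrep B"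
  have a: "?\<alpha> \<in> loops X x0" "A = loop_class X x0 ?\<alpha>" using carrier_rep[OF A] by auto
  have b: "?\<beta> \<in> loops X x0" "B = loop_class X x0 ?\<beta>" using carrier_rep[OF B] by auto
  have nh: "\<not> loop_homotopic X x0 ?\<alpha> ?\<beta>"
  proof
    assume "loop_homotopic X x0 ?\<alpha> ?\<beta>"
    then have "loop_class X x0 ?\<alpha> = loop_class X x0 ?\<beta>" by (rule class_eq)
    then have "A = B" by (rule trans[OF a(2) trans[OF _ b(2)[symmetric]]])
    then show False using AB by simp
  qed
  then obtain U U0 \<phi> where poc: "pointed_open_cover X x0 U U0" and pou: "partition_of_unity X U \<phi>"
    and nn: "\<not> loop_homotopic (nerve_top U) (nerve_vertex U0) (canonical_map \<phi> \<circ> ?\<alpha>) (canonical_map \<phi> \<circ> ?\<beta>)"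
    using assms(2) a(1) b(1) unfolding pi1_injective_def by blast
  let ?cA = "loop_class (nerve_top U) (nerve_vertex U0) (canonical_map \<phi> \<circ> ?\<alpha>)"
  let ?cB = "loop_class (nerve_top U) (nerve_vertex U0) (canonical_map \<phi> \<circ> ?\<beta>)"
  let ?VA = "{C \<in> pi1_carrier X x0. loop_class (nerve_top U) (nerve_vertex U0) (canonical_map \<phi> \<circ> lrep C) = ?cA}"
  let ?VB = "{C \<in> pi1_carrier X x0. loop_class (nerve_top U) (nerve_vertex U0) (canonical_map \<phi> \<circ> lrep C) = ?cB}"
  have ne: "?cA \<noteq> ?cB"
    using class_eqD[OF comp_loopsX[OF assms(1) poc pou a(1)]] nn by blast
  show "\<exists>U V. openin (pi1_tau X x0) U \<and> openin (pi1_tau X x0) V \<and> A \<in> U \<and> B \<in> V \<and> disjnt U V"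
  proof (intro exI conjI)
    show "openin (pi1_tau X x0) ?VA" by (rule tau_level_open[OF assms(1) poc pou])
    show "openin (pi1_tau X x0) ?VB" by (rule tau_level_open[OF assms(1) poc pou])
    show "A \<in> ?VA" using A by simp
    show "B \<in> ?VB" using B by simp
    show "disjnt ?VA ?VB" using ne by (auto simp: disjnt_def)
  qed
qed

end
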